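(* Let $\mathbb{K}$ be a positive commutative monoid and let $H$ be a hypergraph. The following are equivalent: (1) $H$ is acyclic; (2) $H$ has the local-to-global consistency property up to the free cover of $\mathbb{K}$; (3) $H$ has the local-to-global consistency property up to some cover of $\mathbb{K}$.
   Context: Positive: $p+q=0\Rightarrow p=q=0$; monoids have at least two elements. Attributes have domains (arbitrary sets); for a finite attribute set $X$, a $\mathbb{K}$-relation over $X$ is a map $R$ from $X$-tuples to $K$ with finite support $R'$; $t[Y]$ is restriction; marginals $R[Y](t)=\sum_{r\in R',r[Y]=t}R(r)$. With $R_i$ over $X_i$, a collection is pairwise consistent if every two $R_i,R_j$ have some $W$ over $X_i\cup X_j$ with $W[X_i]=R_i,W[X_j]=R_j$, globally consistent if some $W$ over $\bigcup_i X_i$ has $W[X_i]=R_i$ for all $i$. A cover of $\mathbb{K}$ is a pair $(\mathbb{K}^*,h)$, $\mathbb{K}^*$ a positive commutative monoid and $h:\mathbb{K}^*\to\mathbb{K}$ a surjective homomorphism; an $h$-lift of $R$ is a $\mathbb{K}^*$-relation $R^*$ with $h\circ R^*=R$. A collection is pairwise consistent up to the cover if some $h$-lifts $R_1^*,\dots,R_m^*$ form a pairwise consistent collection of $\mathbb{K}^*$-relations. A hypergraph with hyperedges $X_1,\dots,X_m$ (vertices as attributes) has the local-to-global consistency property up to the cover if every collection $R_1(X_1),\dots,R_m(X_m)$ of $\mathbb{K}$-relations that is pairwise consistent up to the cover is globally consistent. The free cover of $\mathbb{K}$ is $h:\mathbb{F}(K^+)\to\mathbb{K}$ where $K^+=K\setminus\{0\}$,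 $\mathbb{F}(K^+)$ is the free commutative monoid generated by $K^+$ (the finitely supported maps $K^+\to\mathbb{Z}^{\ge0}$ under pointwise addition), and $h$ is the unique homomorphism extending the identity on $K^+$. A hypergraph is acyclic (Beeri–Fagin–Maier–Yannakakis) iff it has a join tree: a tree on its hyperedges such that for each vertex the hyperedges containing it form a connected subtree. *)

theory Defs
  imports "HOL-Library.FuncSet" "HOL-Library.Multiset"
begin

text \<open>A commutative monoid is given by a carrier C inside a type of class comm_monoid_add
  (so associativity/commutativity/unit laws are inherited); it must be closed under +,
  contain 0, be positive, and have at least two elements.\<close>

definition pos_comm_monoid :: "'c::comm_monoid_add set \<Rightarrow> bool" where
  "pos_comm_monoid C \<longleftrightarrow>
     0 \<in> C \<and> (\<forall>x\<in>C. \<forall>y\<in>C. x + y \<in> C) \<and>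
     (\<forall>p\<in>C. \<forall>q\<in>C. p + q = 0 \<longrightarrow> p = 0 \<and> q = 0) \<and>
     (\<exists>x\<in>C. \<exists>y\<in>C. x \<noteq> y)"

definition is_cover :: "'c::comm_monoid_add set \<Rightarrow> ('c \<Rightarrow> 'k::comm_monoid_add) \<Rightarrow> bool" where
  "is_cover C h \<longleftrightarrow>
     pos_comm_monoid C \<and> h 0 = 0 \<and> (\<forall>x\<in>C. \<forall>y\<in>C. h (x + y) = h x + h y) \<and>
     h ` C = UNIV"

text \<open>Free cover: the free commutative monoid on K\<setminus>{0}, i.e. finitely supported maps
  K\<setminus>{0} \<rightarrow> nat, represented as multisets not containing 0; the homomorphism
  extending the identity is the multiset sum.\<close>

definition free_carrier :: "'k::comm_monoid_add multiset set" where
  "free_carrier = {M. 0 \<notin># M}"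

definition free_hom :: "'k::comm_monoid_add multiset \<Rightarrow> 'k" where
  "free_hom M = sum_mset M"

text \<open>Tuples over an attribute set X are the functions in extensional X (value undefined
  outside X); restriction t[Y] is restrict t Y.\<close>

definition krel :: "'c::comm_monoid_add set \<Rightarrow> 'a set \<Rightarrow> (('a \<Rightarrow> 'v) \<Rightarrow> 'c) \<Rightarrow> bool" where
  "krel C X R \<longleftrightarrow>
     (\<forall>t. R t \<in> C) \<and> finite {t. R t \<noteq> 0} \<and> (\<forall>t. R t \<noteq> 0 \<longrightarrow> t \<in> extensional X)"

definition marg :: "(('a \<Rightarrow> 'v) \<Rightarrow> 'c::comm_monoid_add) \<Rightarrow> 'a set \<Rightarrow> ('a \<Rightarrow> 'v) \<Rightarrow> 'c" where
  "marg R Y t = (\<Sum>r\<in>{r. R r \<noteq> 0 \<and> restrict r Y = t}. R r)"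

definition pairwise_consistent ::
  "'c::comm_monoid_add set \<Rightarrow> 'a set set \<Rightarrow> ('a set \<Rightarrow> ('a \<Rightarrow> 'v) \<Rightarrow> 'c) \<Rightarrow> bool" where
  "pairwise_consistent C H R \<longleftrightarrow>
     (\<forall>X\<in>H. \<forall>Y\<in>H. \<exists>W. krel C (X \<union> Y) W \<and> marg W X = R X \<and> marg W Y = R Y)"

definition globally_consistent ::
  "'c::comm_monoid_add set \<Rightarrow> 'a set set \<Rightarrow> ('a set \<Rightarrow> ('a \<Rightarrow> 'v) \<Rightarrow> 'c) \<Rightarrow> bool" where
  "globally_consistent C H R \<longleftrightarrow>
     (\<exists>W. krel C (\<Union>H) W \<and> (\<forall>X\<in>H. marg W X = R X))"

text \<open>Local-to-global consistency property of hypergraph H up to the cover (C,h), for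
  relations whose attribute values range over the type 'v (given as a TYPE argument).\<close>

definition lgc_up_to ::
  "'v itself \<Rightarrow> 'c::comm_monoid_add set \<Rightarrow> ('c \<Rightarrow> 'k::comm_monoid_add) \<Rightarrow> 'a set set \<Rightarrow> bool" where
  "lgc_up_to (_::'v itself) C h H \<longleftrightarrow>
     (\<forall>R :: 'a set \<Rightarrow> ('a \<Rightarrow> 'v) \<Rightarrow> 'k.
        (\<forall>X\<in>H. krel UNIV X (R X)) \<longrightarrow>
        (\<exists>Rs. (\<forall>X\<in>H. krel C X (Rs X) \<and> (\<forall>t. h (Rs X t) = R X t)) \<and>
              pairwise_consistent C H Rs) \<longrightarrow>
        globally_consistent UNIV H R)"

definition gwalk :: "'n set \<Rightarrow> 'n set set \<Rightarrow> 'n list \<Rightarrow> bool" where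
  "gwalk V E p \<longleftrightarrow> p \<noteq> [] \<and> set p \<subseteq> V \<and>
     (\<forall>i. Suc i < length p \<longrightarrow> {p ! i, p ! Suc i} \<in> E)"

definition is_tree :: "'n set \<Rightarrow> 'n set set \<Rightarrow> bool" where
  "is_tree V E \<longleftrightarrow> finite V \<and> V \<noteq> {} \<and>
     E \<subseteq> {{x, y} | x y. x \<in> V \<and> y \<in> V \<and> x \<noteq> y} \<and>
     (\<forall>x\<in>V. \<forall>y\<in>V. \<exists>p. gwalk V E p \<and> hd p = x \<and> last p = y) \<and>
     card E + 1 = card V"

definition is_join_tree :: "'a set set \<Rightarrow> 'a set set set \<Rightarrow> bool" where
  "is_join_tree H E \<longleftrightarrow> is_tree H E \<and>
     (\<forall>a. \<forall>X\<in>H. \<forall>Y\<in>H. a \<in> X \<and> a \<in> Y \<longrightarrow>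
        (\<exists>p. gwalk {Z\<in>H. a \<in> Z} E p \<and> hd p = X \<and> last p = Y))"

definition hg_acyclic :: "'a set set \<Rightarrow> bool" where
  "hg_acyclic H \<longleftrightarrow> H = {} \<or> (\<exists>E. is_join_tree H E)"

end

theory Submission
  imports Defs
begin

definition push :: "('x \<Rightarrow> 'y) \<Rightarrow> ('x \<Rightarrow> 'c::comm_monoid_add) \<Rightarrow> 'y \<Rightarrow> 'c" where
  "push f W t = (\<Sum>r\<in>{r. W r \<noteq> 0 \<and> f r = t}. W r)"

lemma marg_push: "marg W Y = push (\<lambda>r. restrict r Y) W"
  by (rule ext) (simp add: marg_def push_def)

lemma push_alt:
  assumes "finite S" "{r. W r \<noteq> 0} \<subseteq> S"
  shows "push f W t = (\<Sum>r\<in>{r\<in>S. f r = t}. W r)"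
  unfolding push_def
  by (rule sum.mono_neutral_left) (use assms in auto)

lemma push_supp: "push f W t \<noteq> 0 \<Longrightarrow> \<exists>r. W r \<noteq> 0 \<and> f r = t"
proof (rule ccontr)
  assume a: "push f W t \<noteq> 0" "\<not> (\<exists>r. W r \<noteq> 0 \<and> f r = t)"
  then have e: "{r. W r \<noteq> 0 \<and> f r = t} = {}" by blast
  have "push f W t = 0" unfolding push_def by (simp only: e sum.empty)
  then show False using a(1) by simp
qed

lemma push_supp_sub: "{t. push f W t \<noteq> 0} \<subseteq> f ` {r. W r \<noteq> 0}"
proof
  fix t assume "t \<in> {t. push f W t \<noteq> 0}"
  then have "push f W t \<noteq> 0" by simp
  from push_supp[OF this] obtain r where "W r \<noteq> 0" "f r = t" by blast
  then show "t \<in> f ` {r. W r \<noteq> 0}" by blast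
qed

lemma push_supp_fin:
  assumes "finite {r. W r \<noteq> 0}"
  shows "finite {t. push f W t \<noteq> 0}"
  by (rule finite_subset[OF push_supp_sub finite_imageI[OF assms]])

lemma push_push:
  assumes fin: "finite {r. W r \<noteq> 0}"
  shows "push g (push f W) = push (g \<circ> f) W"
proof
  fix t
  define S where "S = {r. W r \<noteq> 0}"
  have fS: "finite S" using fin S_def by simp
  have sub: "{s. push f W s \<noteq> 0} \<subseteq> f ` S" using push_supp_sub S_def by simp
  have "push g (push f W) t = (\<Sum>s\<in>{s\<in>f ` S. g s = t}. push f W s)"
    by (rule push_alt) (use fS sub in auto)
  also have "\<dots> = (\<Sum>s\<in>{s\<in>f ` S. g s = t}. \<Sum>r\<in>{r\<in>{r\<in>S. g (f r) = t}. f r = s}. W r)"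
  proof (rule sum.cong)
    fix s assume "s \<in> {s\<in>f ` S. g s = t}"
    then have "{r\<in>{r\<in>S. g (f r) = t}. f r = s} = {r\<in>S. f r = s}" by auto
    then show "push f W s = (\<Sum>r\<in>{r\<in>{r\<in>S. g (f r) = t}. f r = s}. W r)"
      using push_alt[OF fS, of W f s] S_def by simp
  qed simp
  also have "\<dots> = (\<Sum>r\<in>{r\<in>S. g (f r) = t}. W r)"
    by (rule sum.group) (use fS in auto)
  also have "\<dots> = push (g \<circ> f) W t"
    using push_alt[OF fS, of W "g \<circ> f" t] S_def by simp
  finally show "push g (push f W) t = push (g \<circ> f) W t" .
qed

lemma push_cong: "(\<And>r. W r \<noteq> 0 \<Longrightarrow> f r = g r) \<Longrightarrow> push f W = push g W"
  unfolding push_def by (intro ext sum.cong) auto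

lemma push_id:
  assumes "\<And>r. W r \<noteq> 0 \<Longrightarrow> f r = r"
  shows "push f W = W"
proof
  fix t
  have "{r. W r \<noteq> 0 \<and> f r = t} = (if W t \<noteq> 0 then {t} else {})"
    using assms by auto
  then show "push f W t = W t" unfolding push_def by auto
qed

lemma sum_closed:
  assumes "0 \<in> C" "\<forall>x\<in>C. \<forall>y\<in>C. x + y \<in> C" "\<And>x. x \<in> A \<Longrightarrow> g x \<in> C"
  shows "sum g A \<in> C"
  using assms(3)
proof (induction A rule: infinite_finite_induct)
  case (insert x F)
  then show ?case using assms(2) by simp
qed (use assms in auto)

lemma hom_sum:
  assumes "h 0 = 0" "\<forall>x\<in>C. \<forall>y\<in>C. h (x + y) = h x + h y"
    "0 \<in> C" "\<forall>x\<in>C. \<forall>y\<in>C. x + y \<in> C" "\<And>x. x \<in> A \<Longrightarrow> g x \<in> C" "finite A"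
  shows "h (sum g A) = (\<Sum>x\<in>A. h (g x))"
  using assms(6,5)
proof (induction A rule: finite_induct)
  case (insert x F)
  have "sum g F \<in> C" by (rule sum_closed) (use assms insert in auto)
  then show ?case using insert assms(2) by simp
qed (use assms in auto)

lemma push_hom:
  assumes "h 0 = 0" "\<forall>x\<in>C. \<forall>y\<in>C. h (x + y) = h x + h y"
    "0 \<in> C" "\<forall>x\<in>C. \<forall>y\<in>C. x + y \<in> C" "\<And>r. W r \<in> C" "finite {r. W r \<noteq> 0}"
  shows "h (push f W t) = push f (\<lambda>r. h (W r)) t"
proof -
  define S where "S = {r. W r \<noteq> 0}"
  have "h (push f W t) = h (\<Sum>r\<in>{r\<in>S. f r = t}. W r)"
    using push_alt[of S W f t] assms(6) S_def by simp
  also have "\<dots> = (\<Sum>r\<in>{r\<in>S. f r = t}. h (W r))"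
    by (rule hom_sum[OF assms(1-4)]) (use assms(5,6) S_def in auto)
  also have "\<dots> = push f (\<lambda>r. h (W r)) t"
    by (rule push_alt[symmetric]) (use assms(1,6) S_def in auto)
  finally show ?thesis .
qed

lemma push_krel:
  assumes "0 \<in> C" "\<forall>x\<in>C. \<forall>y\<in>C. x + y \<in> C" "\<And>r. W r \<in> C" "finite {r. W r \<noteq> 0}"
    "\<And>r. W r \<noteq> 0 \<Longrightarrow> f r \<in> extensional Y"
  shows "krel C Y (push f W)"
  unfolding krel_def
proof (intro conjI allI impI)
  fix t show "push f W t \<in> C" unfolding push_def by (rule sum_closed) (use assms in auto)
next
  show "finite {t. push f W t \<noteq> 0}" by (rule push_supp_fin[OF assms(4)])
next
  fix t assume "push f W t \<noteq> 0"
  then obtain r where "W r \<noteq> 0" "f r = t" using push_supp by metis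
  then show "t \<in> extensional Y" using assms(5) by metis
qed

lemma pos_all:
  assumes "pos_comm_monoid C"
  shows "0 \<in> C \<and> (\<forall>x\<in>C. \<forall>y\<in>C. x + y \<in> C) \<and>
     (\<forall>p\<in>C. \<forall>q\<in>C. p + q = 0 \<longrightarrow> p = 0 \<and> q = 0)"
  using assms unfolding pos_comm_monoid_def by (elim conjE) (intro conjI)

lemma pos_parts:
  assumes "pos_comm_monoid C"
  shows "0 \<in> C" "\<forall>x\<in>C. \<forall>y\<in>C. x + y \<in> C" "\<And>p q. p \<in> C \<Longrightarrow> q \<in> C \<Longrightarrow> p + q = 0 \<Longrightarrow> p = 0"
    "\<And>p q. p \<in> C \<Longrightarrow> q \<in> C \<Longrightarrow> p + q = 0 \<Longrightarrow> q = 0"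
proof -
  note A = pos_all[OF assms]
  show "0 \<in> C" using A by (elim conjE)
  show "\<forall>x\<in>C. \<forall>y\<in>C. x + y \<in> C" using A by (elim conjE)
  fix p q assume "p \<in> C" "q \<in> C" "p + q = 0"
  then show "p = 0" using A by (elim conjE) (drule bspec, assumption, drule bspec, assumption, drule mp, assumption, elim conjE)
next
  note A = pos_all[OF assms]
  fix p q assume "p \<in> C" "q \<in> C" "p + q = 0"
  then show "q = 0" using A by (elim conjE) (drule bspec, assumption, drule bspec, assumption, drule mp, assumption, elim conjE)
qed

lemma pos_sum:
  assumes "pos_comm_monoid C" "finite A" "\<And>x. x \<in> A \<Longrightarrow> g x \<in> C" "sum g A = 0"
  shows "\<forall>x\<in>A. g x = 0"
  using assms(2,3,4)
proof (induction A rule: finite_induct)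
  case (insert x F)
  have gF: "\<And>y. y \<in> F \<Longrightarrow> g y \<in> C" using insert.prems(1) by simp
  have sF: "sum g F \<in> C" by (rule sum_closed[OF pos_parts(1,2)[OF assms(1)] gF])
  have gx: "g x \<in> C" using insert.prems(1) by simp
  have e: "g x + sum g F = 0" using insert.prems(2) insert.hyps by simp
  have "g x = 0" by (rule pos_parts(3)[OF assms(1) gx sF e])
  moreover have "sum g F = 0" by (rule pos_parts(4)[OF assms(1) gx sF e])
  ultimately show ?case using insert.IH[OF gF] by simp
qed simp

lemma push_pos:
  assumes "pos_comm_monoid C" "\<And>r. W r \<in> C" "finite {r. W r \<noteq> 0}" "W r \<noteq> 0"
  shows "push f W (f r) \<noteq> 0"
proof
  assume a: "push f W (f r) = 0"
  have fin: "finite {r'. W r' \<noteq> 0 \<and> f r' = f r}"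
    by (rule finite_subset[OF _ assms(3)]) auto
  have "\<forall>x\<in>{r'. W r' \<noteq> 0 \<and> f r' = f r}. W x = 0"
    by (rule pos_sum[OF assms(1) fin]) (use assms(2) a in \<open>simp_all add: push_def\<close>)
  then show False using assms(4) by auto
qed

lemma push_add:
  assumes "finite {r. A r \<noteq> 0}" "finite {r. B r \<noteq> 0}"
  shows "push f (\<lambda>r. A r + B r) t = push f A t + push f B t"
proof -
  define S where "S = {r. A r \<noteq> 0} \<union> {r. B r \<noteq> 0}"
  have fS: "finite S" using assms S_def by simp
  have "push f (\<lambda>r. A r + B r) t = (\<Sum>r\<in>{r\<in>S. f r = t}. A r + B r)"
    by (rule push_alt) (use fS S_def in auto)
  also have "\<dots> = (\<Sum>r\<in>{r\<in>S. f r = t}. A r) + (\<Sum>r\<in>{r\<in>S. f r = t}. B r)"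
    by (rule sum.distrib)
  also have "\<dots> = push f A t + push f B t"
    using push_alt[OF fS, of A f t] push_alt[OF fS, of B f t] S_def by simp
  finally show ?thesis .
qed

lemma push_point:
  "push f (\<lambda>r. if r = a then M else 0) t = (if f a = t then M else 0)"
proof -
  have "push f (\<lambda>r. if r = a then M else 0) t = (\<Sum>r\<in>{r\<in>{a}. f r = t}. if r = a then M else 0)"
    by (rule push_alt) auto
  moreover have "{r\<in>{a}. f r = t} = (if f a = t then {a} else {})" by auto
  ultimately show ?thesis by simp
qed

lemma mem_push:
  fixes W :: "'x \<Rightarrow> 'g multiset"
  assumes "finite {r. W r \<noteq> 0}"
  shows "g \<in># push f W t \<longleftrightarrow> (\<exists>r. f r = t \<and> g \<in># W r)"
proof -
  have fin: "finite {r. W r \<noteq> 0 \<and> f r = t}" by (rule finite_subset[OF _ assms]) auto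
  have "g \<in># push f W t \<longleftrightarrow> (\<exists>r\<in>{r. W r \<noteq> 0 \<and> f r = t}. g \<in># W r)"
    unfolding push_def set_mset_sum[OF fin] by blast
  also have "\<dots> \<longleftrightarrow> (\<exists>r. f r = t \<and> g \<in># W r)" by force
  finally show ?thesis .
qed

lemma push_zero: "push f (\<lambda>r. 0) = (\<lambda>t. 0)"
  unfolding push_def by (rule ext) simp

definition tot :: "('x \<Rightarrow> 'g multiset) \<Rightarrow> 'g multiset" where
  "tot A = push (\<lambda>_. ()) A ()"

lemma glue_aux:
  fixes X Y :: "'a set"
  shows "\<forall>A B :: ('a \<Rightarrow> 'v) \<Rightarrow> 'g multiset. size (tot A) = n \<longrightarrow> finite {r. A r \<noteq> 0} \<longrightarrow> finite {r. B r \<noteq> 0}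
   \<longrightarrow> (\<forall>r. A r \<noteq> 0 \<longrightarrow> r \<in> extensional X) \<longrightarrow> (\<forall>r. B r \<noteq> 0 \<longrightarrow> r \<in> extensional Y)
   \<longrightarrow> marg A (X \<inter> Y) = marg B (X \<inter> Y)
   \<longrightarrow> (\<exists>W. finite {r. W r \<noteq> 0} \<and> (\<forall>r. W r \<noteq> 0 \<longrightarrow> r \<in> extensional (X \<union> Y))
          \<and> (\<forall>r. set_mset (W r) \<subseteq> (\<Union>s. set_mset (A s))) \<and> marg W X = A \<and> marg W Y = B)"
proof (induction n rule: less_induct)
  case (less n)
  show ?case
  proof (intro allI impI)
    fix A B :: "('a \<Rightarrow> 'v) \<Rightarrow> 'g multiset"
    assume sz: "size (tot A) = n" and fA: "finite {r. A r \<noteq> 0}" and fB: "finite {r. B r \<noteq> 0}"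
      and eA: "\<forall>r. A r \<noteq> 0 \<longrightarrow> r \<in> extensional X" and eB: "\<forall>r. B r \<noteq> 0 \<longrightarrow> r \<in> extensional Y"
      and m: "marg A (X \<inter> Y) = marg B (X \<inter> Y)"
    define I where "I = X \<inter> Y"
    show "\<exists>W. finite {r. W r \<noteq> 0} \<and> (\<forall>r. W r \<noteq> 0 \<longrightarrow> r \<in> extensional (X \<union> Y))
          \<and> (\<forall>r. set_mset (W r) \<subseteq> (\<Union>s. set_mset (A s))) \<and> marg W X = A \<and> marg W Y = B"
    proof (cases "\<exists>a. A a \<noteq> 0")
      case False
      then have A0: "A = (\<lambda>r. 0)" by auto
      have B0: "B = (\<lambda>r. 0)"
      proof
        fix b show "B b = 0"
        proof (rule ccontr)
          assume "B b \<noteq> 0"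
          then obtain g where g: "g \<in># B b" by (meson multiset_nonemptyE)
          have "g \<in># marg B I (restrict b I)"
            unfolding marg_push mem_push[OF fB] using g by blast
          then have "g \<in># marg A I (restrict b I)" using m I_def by simp
          then show False unfolding A0 marg_push push_zero by simp
        qed
      qed
      show ?thesis
        by (rule exI[of _ "\<lambda>r. 0"]) (simp add: A0 B0 marg_push push_zero)
    next
      case True
      then obtain a where aA: "A a \<noteq> 0" by blast
      then obtain g where g: "g \<in># A a" by (meson multiset_nonemptyE)
      have aX: "a \<in> extensional X" using eA aA by blast
      define s where "s = restrict a I"
      have "g \<in># marg A I s" unfolding marg_push mem_push[OF fA] s_def using g by blast
      then have "g \<in># marg B I s" using m I_def by simp
      then obtain b where bs: "restrict b I = s" and gb: "g \<in># B b"
        unfolding marg_push mem_push[OF fB] by blast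
      have "B b \<noteq> 0" using gb by auto
      then have bY: "b \<in> extensional Y" using eB by blast
      define A' where "A' = A(a := A a - {#g#})"
      define B' where "B' = B(b := B b - {#g#})"
      define dA where "dA = (\<lambda>r. if r = a then {#g#} else (0::'g multiset))"
      define dB where "dB = (\<lambda>r. if r = b then {#g#} else (0::'g multiset))"
      have Aeq: "A = (\<lambda>r. A' r + dA r)" unfolding A'_def dA_def using g by (auto simp: insert_DiffM2)
      have Beq: "B = (\<lambda>r. B' r + dB r)" unfolding B'_def dB_def using gb by (auto simp: insert_DiffM2)
      have fA': "finite {r. A' r \<noteq> 0}"
        by (rule finite_subset[OF _ finite_insert[THEN iffD2, OF fA, of a]]) (auto simp: A'_def)
      have fB': "finite {r. B' r \<noteq> 0}"
        by (rule finite_subset[OF _ finite_insert[THEN iffD2, OF fB, of b]]) (auto simp: B'_def)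
      have fdA: "finite {r. dA r \<noteq> 0}" by (rule finite_subset[of _ "{a}"]) (auto simp: dA_def)
      have fdB: "finite {r. dB r \<noteq> 0}" by (rule finite_subset[of _ "{b}"]) (auto simp: dB_def)
      have pA: "push f A t = push f A' t + (if f a = t then {#g#} else 0)" for f :: "('a \<Rightarrow> 'v) \<Rightarrow> 'z" and t
        by (subst Aeq, subst push_add[OF fA' fdA]) (simp add: dA_def push_point)
      have pB: "push f B t = push f B' t + (if f b = t then {#g#} else 0)" for f :: "('a \<Rightarrow> 'v) \<Rightarrow> 'z" and t
        by (subst Beq, subst push_add[OF fB' fdB]) (simp add: dB_def push_point)
      have m': "marg A' I = marg B' I"
      proof
        fix t
        have "marg A I t = marg B I t" using m I_def by simp
        then have "marg A' I t + (if s = t then {#g#} else 0) = marg B' I t + (if s = t then {#g#} else 0)"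
          unfolding marg_push pA pB using bs s_def by simp
        then show "marg A' I t = marg B' I t" by simp
      qed
      have "tot A = tot A' + {#g#}" unfolding tot_def by (simp add: pA)
      then have szA': "size (tot A') < n" using sz by simp
      have eA': "\<forall>r. A' r \<noteq> 0 \<longrightarrow> r \<in> extensional X" using eA aX by (auto simp: A'_def)
      have eB': "\<forall>r. B' r \<noteq> 0 \<longrightarrow> r \<in> extensional Y" using eB bY by (auto simp: B'_def)
      obtain W' where fW': "finite {r. W' r \<noteq> 0}" and eW': "\<forall>r. W' r \<noteq> 0 \<longrightarrow> r \<in> extensional (X \<union> Y)"
        and sW': "\<forall>r. set_mset (W' r) \<subseteq> (\<Union>s. set_mset (A' s))" and mX: "marg W' X = A'" and mY: "marg W' Y = B'"
        using less.IH[OF szA', rule_format, OF refl fA' fB' eA'[rule_format] eB'[rule_format] m'[unfolded I_def]] by blast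
      define c where "c = (\<lambda>x. if x \<in> X then a x else b x)"
      have cXY: "c \<in> extensional (X \<union> Y)" using aX bY unfolding c_def extensional_def by auto
      have cX: "restrict c X = a" using aX unfolding c_def extensional_def restrict_def by auto
      have cY: "restrict c Y = b"
      proof
        fix x show "restrict c Y x = b x"
        proof (cases "x \<in> X \<inter> Y")
          case True
          have "restrict a I x = restrict b I x" using bs s_def by simp
          then show ?thesis using True unfolding c_def restrict_def I_def by simp
        next
          case False
          then show ?thesis using bY unfolding c_def restrict_def extensional_def by auto
        qed
      qed
      define dC where "dC = (\<lambda>r. if r = c then {#g#} else (0::'g multiset))"
      have fdC: "finite {r. dC r \<noteq> 0}" by (rule finite_subset[of _ "{c}"]) (auto simp: dC_def)
      define W where "W = (\<lambda>r. W' r + dC r)"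
      have pW: "push f W t = push f W' t + (if f c = t then {#g#} else 0)" for f :: "('a \<Rightarrow> 'v) \<Rightarrow> 'z" and t
        unfolding W_def by (subst push_add[OF fW' fdC]) (simp add: dC_def push_point)
      show ?thesis
      proof (intro exI conjI allI impI)
        show "finite {r. W r \<noteq> 0}"
          by (rule finite_subset[OF _ finite_insert[THEN iffD2, OF fW', of c]]) (auto simp: W_def dC_def)
      next
        fix r assume "W r \<noteq> 0"
        then show "r \<in> extensional (X \<union> Y)" using eW' cXY by (cases "r = c") (auto simp: W_def dC_def)
      next
        fix r
        have sub1: "set_mset (A' s) \<subseteq> set_mset (A s)" for s
          unfolding A'_def by (cases "s = a") (auto dest: in_diffD)
        have sub2: "(\<Union>s. set_mset (A' s)) \<subseteq> (\<Union>s. set_mset (A s))"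
          by (intro UN_mono sub1 subset_refl)
        have sub3: "set_mset (W r) \<subseteq> set_mset (W' r) \<union> {g}"
          unfolding W_def dC_def by (cases "r = c") auto
        have sub4: "g \<in> (\<Union>s. set_mset (A s))" using g by blast
        have sub5: "set_mset (W' r) \<subseteq> (\<Union>s. set_mset (A' s))" using sW' by simp
        show "set_mset (W r) \<subseteq> (\<Union>s. set_mset (A s))"
        proof
          fix x assume "x \<in> set_mset (W r)"
          then have "x \<in> set_mset (W' r) \<or> x = g" using sub3 by blast
          then show "x \<in> (\<Union>s. set_mset (A s))"
          proof
            assume "x \<in> set_mset (W' r)"
            then show ?thesis using sub5 sub2 by (meson subsetD)
          qed (use sub4 in simp)
        qed
      next
        show "marg W X = A"
        proof
          fix t
          have "marg W X t = marg W' X t + (if restrict c X = t then {#g#} else 0)"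
            unfolding marg_push by (rule pW)
          also have "\<dots> = A' t + dA t" using mX cX by (simp add: dA_def)
          also have "\<dots> = A t" using fun_cong[OF Aeq, of t] by simp
          finally show "marg W X t = A t" .
        qed
      next
        show "marg W Y = B"
        proof
          fix t
          have "marg W Y t = marg W' Y t + (if restrict c Y = t then {#g#} else 0)"
            unfolding marg_push by (rule pW)
          also have "\<dots> = B' t + dB t" using mY cY by (simp add: dB_def)
          also have "\<dots> = B t" using fun_cong[OF Beq, of t] by simp
          finally show "marg W Y t = B t" .
        qed
      qed
    qed
  qed
qed

lemma gwalk_Nil[simp]: "\<not> gwalk V E []"
  unfolding gwalk_def by simp

lemma gwalk_single[simp]: "gwalk V E [x] \<longleftrightarrow> x \<in> V"
  unfolding gwalk_def by simp

lemma gwalk_Cons2: "gwalk V E (x # y # p) \<longleftrightarrow> x \<in> V \<and> {x, y} \<in> E \<and> gwalk V E (y # p)"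
proof
  assume a: "gwalk V E (x # y # p)"
  have xV: "x \<in> V" using a unfolding gwalk_def by simp
  have "{(x # y # p) ! 0, (x # y # p) ! Suc 0} \<in> E"
    using a[unfolded gwalk_def, THEN conjunct2, THEN conjunct2, rule_format, of 0] by simp
  then have e: "{x, y} \<in> E" by simp
  have "gwalk V E (y # p)"
    unfolding gwalk_def
  proof (intro conjI allI impI)
    show "set (y # p) \<subseteq> V" using a unfolding gwalk_def by simp
    fix i assume "Suc i < length (y # p)"
    then have "Suc (Suc i) < length (x # y # p)" by simp
    then have "{(x # y # p) ! Suc i, (x # y # p) ! Suc (Suc i)} \<in> E" using a unfolding gwalk_def by blast
    then show "{(y # p) ! i, (y # p) ! Suc i} \<in> E" by simp
  qed simp
  then show "x \<in> V \<and> {x, y} \<in> E \<and> gwalk V E (y # p)" using xV e by simp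
next
  assume a: "x \<in> V \<and> {x, y} \<in> E \<and> gwalk V E (y # p)"
  show "gwalk V E (x # y # p)"
    unfolding gwalk_def
  proof (intro conjI allI impI)
    show "set (x # y # p) \<subseteq> V" using a unfolding gwalk_def by simp
    fix i assume i: "Suc i < length (x # y # p)"
    show "{(x # y # p) ! i, (x # y # p) ! Suc i} \<in> E"
    proof (cases i)
      case 0
      then show ?thesis using a by simp
    next
      case (Suc j)
      then have "Suc j < length (y # p)" using i by simp
      then have "{(y # p) ! j, (y # p) ! Suc j} \<in> E" using a unfolding gwalk_def by blast
      then show ?thesis using Suc by simp
    qed
  qed simp
qed

lemma gwalk_Cons: "gwalk V E (x # q) \<longleftrightarrow> x \<in> V \<and> (q = [] \<or> ({x, hd q} \<in> E \<and> gwalk V E q))"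
  by (cases q) (simp_all add: gwalk_Cons2)

lemma gwalk_mono: "gwalk V E p \<Longrightarrow> V \<subseteq> V' \<Longrightarrow> E \<subseteq> E' \<Longrightarrow> gwalk V' E' p"
  unfolding gwalk_def by blast

lemma gwalk_append:
  "gwalk V E p \<Longrightarrow> gwalk V E q \<Longrightarrow> {last p, hd q} \<in> E \<Longrightarrow> gwalk V E (p @ q)"
proof (induction p)
  case Nil
  then show ?case by simp
next
  case (Cons x p')
  show ?case
  proof (cases "p' = []")
    case True
    have "q \<noteq> []" using Cons.prems(2) by auto
    then show ?thesis using True Cons.prems gwalk_Cons[of V E x q] by simp
  next
    case False
    have g': "gwalk V E p'" and xV: "x \<in> V" and ex: "{x, hd p'} \<in> E"
      using Cons.prems(1) False gwalk_Cons[of V E x p'] by auto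
    have "gwalk V E (p' @ q)" using Cons.IH[OF g' Cons.prems(2)] Cons.prems(3) False by simp
    moreover have "hd (p' @ q) = hd p'" using False by simp
    ultimately show ?thesis using xV ex gwalk_Cons[of V E x "p' @ q"] False by simp
  qed
qed

lemma gwalk_rev: "gwalk V E p \<Longrightarrow> gwalk V E (rev p)"
proof (induction p)
  case Nil
  then show ?case by simp
next
  case (Cons x p')
  show ?case
  proof (cases "p' = []")
    case True
    then show ?thesis using Cons.prems by simp
  next
    case False
    have g': "gwalk V E p'" and xV: "x \<in> V" and ex: "{x, hd p'} \<in> E"
      using Cons.prems(1) False gwalk_Cons[of V E x p'] by auto
    have "{last (rev p'), hd [x]} \<in> E" using ex False by (simp add: last_rev insert_commute)
    then have "gwalk V E (rev p' @ [x])" using gwalk_append[OF Cons.IH[OF g'], of "[x]"] xV by simp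
    then show ?thesis by simp
  qed
qed

lemma walk_sym:
  assumes "gwalk V E p" "hd p = x" "last p = y"
  shows "\<exists>q. gwalk V E q \<and> hd q = y \<and> last q = x"
proof -
  have "p \<noteq> []" using assms(1) by auto
  then show ?thesis using gwalk_rev[OF assms(1)] assms(2,3) by (intro exI[of _ "rev p"]) (simp add: hd_rev last_rev)
qed

lemma conn_insert:
  assumes conn: "\<And>x y. x \<in> S \<Longrightarrow> y \<in> S \<Longrightarrow> \<exists>p. gwalk V E p \<and> hd p = x \<and> last p = y"
    and YV: "Y \<in> V"
    and fromY: "\<And>y. y \<in> S \<Longrightarrow> \<exists>p. gwalk V E p \<and> hd p = Y \<and> last p = y"
    and xS: "x \<in> insert Y S" and yS: "y \<in> insert Y S"
  shows "\<exists>p. gwalk V E p \<and> hd p = x \<and> last p = y"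
proof (cases "x = Y")
  case True
  show ?thesis
  proof (cases "y = Y")
    case True
    then show ?thesis using \<open>x = Y\<close> YV by (intro exI[of _ "[Y]"]) simp
  next
    case False
    then show ?thesis using fromY yS \<open>x = Y\<close> by simp
  qed
next
  case False
  then have xS': "x \<in> S" using xS by simp
  show ?thesis
  proof (cases "y = Y")
    case True
    obtain p where "gwalk V E p" "hd p = Y" "last p = x" using fromY[OF xS'] by blast
    then show ?thesis using walk_sym True by metis
  next
    case False
    then show ?thesis using conn xS' yS by simp
  qed
qed

lemma walk_avoid:
  assumes "gwalk V E p" "\<forall>e\<in>E. L \<in> e \<longrightarrow> e = {L, P}" "L \<noteq> P" "last p \<noteq> L"
  shows "\<exists>q. gwalk (V - {L}) (E - {{L, P}}) q \<and> hd q = (if hd p = L then P else hd p) \<and> last q = last p"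
  using assms(1,4)
proof (induction p)
  case Nil
  then show ?case by simp
next
  case (Cons x p')
  show ?case
  proof (cases "p' = []")
    case True
    then show ?thesis using Cons.prems by (intro exI[of _ "[x]"]) simp
  next
    case False
    have g': "gwalk V E p'" and xV: "x \<in> V" and ex: "{x, hd p'} \<in> E"
      using Cons.prems(1) False gwalk_Cons[of V E x p'] by auto
    have lp: "last p' \<noteq> L" using Cons.prems(2) False by simp
    obtain q' where q': "gwalk (V - {L}) (E - {{L, P}}) q'"
      and hq': "hd q' = (if hd p' = L then P else hd p')" and lq': "last q' = last p'"
      using Cons.IH[OF g' lp] by blast
    have qne: "q' \<noteq> []" using q' by auto
    show ?thesis
    proof (cases "x = L")
      case True
      then have "{x, hd p'} = {L, P}" using assms(2)[rule_format, OF ex] by simp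
      then have "hd p' = P" using True assms(3) by (auto simp: doubleton_eq_iff)
      then show ?thesis using True hq' lq' q' assms(3) qne False
        by (intro exI[of _ q']) simp
    next
      case xL: False
      show ?thesis
      proof (cases "hd p' = L")
        case True
        then have "{x, hd p'} = {L, P}" using assms(2)[rule_format, OF ex] by simp
        then have "x = P" using True xL by (auto simp: doubleton_eq_iff)
        then show ?thesis using True hq' lq' q' xL qne False
          by (intro exI[of _ q']) simp
      next
        case hL: False
        have "L \<notin> {x, hd p'}" using xL hL by simp
        then have "{x, hd p'} \<noteq> {L, P}" by auto
        then have "{x, hd q'} \<in> E - {{L, P}}" using ex hq' hL by simp
        then have "gwalk (V - {L}) (E - {{L, P}}) (x # q')"
          using q' qne xV xL gwalk_Cons[of "V - {L}" "E - {{L, P}}" x q'] by simp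
        then show ?thesis using xL lq' qne False by (intro exI[of _ "x # q'"]) simp
      qed
    qed
  qed
qed

lemma gwalk_hd: "gwalk V E q \<Longrightarrow> hd q \<in> V"
  unfolding gwalk_def by (cases q) auto

lemma tree_parts:
  assumes "is_tree V E"
  shows "finite V" "V \<noteq> {}" "E \<subseteq> {{x, y} | x y. x \<in> V \<and> y \<in> V \<and> x \<noteq> y}"
    "\<And>x y. x \<in> V \<Longrightarrow> y \<in> V \<Longrightarrow> \<exists>p. gwalk V E p \<and> hd p = x \<and> last p = y"
    "card E + 1 = card V"
  using assms unfolding is_tree_def by blast+

lemma tree_finE:
  assumes "is_tree V E" shows "finite E"
proof -
  have "E \<subseteq> Pow V" using tree_parts(3)[OF assms] by blast
  then show ?thesis using tree_parts(1)[OF assms] finite_subset by blast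
qed

lemma tree_edge:
  assumes "is_tree V E" "e \<in> E"
  obtains x y where "e = {x, y}" "x \<in> V" "y \<in> V" "x \<noteq> y"
  using tree_parts(3)[OF assms(1)] assms(2) by blast

lemma card_filter_sum:
  assumes "finite A"
  shows "card {x\<in>A. P x} = (\<Sum>x\<in>A. if P x then 1 else (0::nat))"
  using sum.inter_filter[OF assms, of "\<lambda>_. (1::nat)" P] by simp

lemma tree_leaf:
  assumes T: "is_tree V E" and c2: "card V \<ge> 2"
  shows "\<exists>L P. L \<in> V \<and> P \<in> V \<and> L \<noteq> P \<and> {L, P} \<in> E \<and> (\<forall>e\<in>E. L \<in> e \<longrightarrow> e = {L, P})"
proof -
  have fV: "finite V" using tree_parts(1)[OF T] .
  have fE: "finite E" using tree_finE[OF T] .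
  define deg where "deg x = card {e\<in>E. x \<in> e}" for x
  have deg1: "deg x \<ge> 1" if xV: "x \<in> V" for x
  proof -
    have "V - {x} \<noteq> {}"
    proof
      assume "V - {x} = {}"
      then have "V \<subseteq> {x}" by simp
      then have "card V \<le> card {x}" by (rule card_mono[rotated]) simp
      then show False using c2 by simp
    qed
    then obtain y where yV: "y \<in> V" and yx: "y \<noteq> x" by auto
    obtain p where p: "gwalk V E p" "hd p = x" "last p = y" using tree_parts(4)[OF T xV yV] by blast
    then obtain q where pq: "p = x # q" by (cases p) auto
    then have "q \<noteq> []" using p yx by auto
    then have "{x, hd q} \<in> E" using p(1) pq gwalk_Cons[of V E x q] by simp
    then have "{x, hd q} \<in> {e\<in>E. x \<in> e}" by simp
    moreover have "finite {e\<in>E. x \<in> e}" using fE by simp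
    ultimately have "card {e\<in>E. x \<in> e} \<noteq> 0" by (metis card_0_eq empty_iff)
    then show ?thesis unfolding deg_def by simp
  qed
  have sumdeg: "(\<Sum>x\<in>V. deg x) = 2 * card E"
  proof -
    have "(\<Sum>x\<in>V. deg x) = (\<Sum>x\<in>V. \<Sum>e\<in>E. if x \<in> e then 1 else (0::nat))"
      unfolding deg_def using card_filter_sum[OF fE] by simp
    also have "\<dots> = (\<Sum>e\<in>E. \<Sum>x\<in>V. if x \<in> e then 1 else (0::nat))" by (rule sum.swap)
    also have "\<dots> = (\<Sum>e\<in>E. 2)"
    proof (rule sum.cong[OF refl])
      fix e assume "e \<in> E"
      then obtain a b where e: "e = {a, b}" "a \<in> V" "b \<in> V" "a \<noteq> b" by (rule tree_edge[OF T])
      have se: "{x\<in>V. x \<in> e} = {a, b}" unfolding e(1) using e(2,3) by auto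
      have "(\<Sum>x\<in>V. if x \<in> e then 1 else (0::nat)) = card {x\<in>V. x \<in> e}"
        using card_filter_sum[OF fV] by simp
      then show "(\<Sum>x\<in>V. if x \<in> e then 1 else (0::nat)) = 2" using e(4) se by simp
    qed
    also have "\<dots> = 2 * card E" by simp
    finally show ?thesis .
  qed
  have "\<exists>L\<in>V. deg L < 2"
  proof (rule ccontr)
    assume "\<not> (\<exists>L\<in>V. deg L < 2)"
    then have "\<forall>x\<in>V. 2 \<le> deg x" by auto
    then have "(\<Sum>x\<in>V. (2::nat)) \<le> (\<Sum>x\<in>V. deg x)" by (intro sum_mono) auto
    then have "2 * card V \<le> 2 * card E" using sumdeg by simp
    then show False using tree_parts(5)[OF T] by simp
  qed
  then obtain L where LV: "L \<in> V" and dL: "deg L < 2" by blast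
  have "deg L = 1" using deg1[OF LV] dL by simp
  then obtain e0 where e0: "{e\<in>E. L \<in> e} = {e0}" unfolding deg_def by (metis card_1_singletonE)
  then have e0E: "e0 \<in> E" and Le0: "L \<in> e0" by auto
  obtain a b where ab: "e0 = {a, b}" "a \<in> V" "b \<in> V" "a \<noteq> b" by (rule tree_edge[OF T e0E])
  define P where "P = (if a = L then b else a)"
  have e0LP: "e0 = {L, P}" using ab Le0 unfolding P_def by auto
  have PV: "P \<in> V" using ab unfolding P_def by auto
  have LP: "L \<noteq> P" using ab Le0 unfolding P_def by auto
  have uniq: "\<forall>e\<in>E. L \<in> e \<longrightarrow> e = {L, P}"
  proof (intro ballI impI)
    fix e assume "e \<in> E" "L \<in> e"
    then have "e \<in> {e\<in>E. L \<in> e}" by simp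
    then show "e = {L, P}" using e0 e0LP by simp
  qed
  show ?thesis using LV PV LP e0E e0LP uniq by blast
qed

lemma remove_leaf:
  assumes J: "is_join_tree H E" and c2: "card H \<ge> 2"
    and LH: "L \<in> H" and LP: "L \<noteq> P" and eLP: "{L, P} \<in> E" and uniq: "\<forall>e\<in>E. L \<in> e \<longrightarrow> e = {L, P}"
  shows "is_join_tree (H - {L}) (E - {{L, P}})" "\<And>a Z. a \<in> L \<Longrightarrow> Z \<in> H - {L} \<Longrightarrow> a \<in> Z \<Longrightarrow> a \<in> P"
proof -
  have T: "is_tree H E" using J unfolding is_join_tree_def by blast
  have jp: "\<And>a X Y. X \<in> H \<Longrightarrow> Y \<in> H \<Longrightarrow> a \<in> X \<Longrightarrow> a \<in> Y \<Longrightarrow> \<exists>p. gwalk {Z\<in>H. a \<in> Z} E p \<and> hd p = X \<and> last p = Y"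
    using J unfolding is_join_tree_def by blast
  have fH: "finite H" using tree_parts(1)[OF T] .
  have fE: "finite E" using tree_finE[OF T] .
  have PH: "P \<in> H"
  proof -
    obtain x y where "{L, P} = {x, y}" "x \<in> H" "y \<in> H" "x \<noteq> y" by (rule tree_edge[OF T eLP])
    then show ?thesis by (auto simp: doubleton_eq_iff)
  qed
  have c1: "finite (H - {L})" using fH by simp
  have c2': "H - {L} \<noteq> {}" using PH LP by blast
  have c3: "E - {{L, P}} \<subseteq> {{x, y} |x y. x \<in> H - {L} \<and> y \<in> H - {L} \<and> x \<noteq> y}"
  proof
    fix e assume e: "e \<in> E - {{L, P}}"
    then have eE: "e \<in> E" by simp
    obtain x y where xy: "e = {x, y}" "x \<in> H" "y \<in> H" "x \<noteq> y" by (rule tree_edge[OF T eE])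
    have "L \<notin> e"
    proof
      assume "L \<in> e"
      then have "e = {L, P}" using uniq eE by simp
      then show False using e by simp
    qed
    then have "x \<in> H - {L}" "y \<in> H - {L}" using xy by auto
    then show "e \<in> {{x, y} |x y. x \<in> H - {L} \<and> y \<in> H - {L} \<and> x \<noteq> y}" using xy(1,4) by blast
  qed
  have c4: "\<forall>x\<in>H - {L}. \<forall>y\<in>H - {L}. \<exists>p. gwalk (H - {L}) (E - {{L, P}}) p \<and> hd p = x \<and> last p = y"
  proof (intro ballI)
    fix x y assume x: "x \<in> H - {L}" and y: "y \<in> H - {L}"
    obtain p where p: "gwalk H E p" "hd p = x" "last p = y" using tree_parts(4)[OF T] x y by blast
    obtain q where "gwalk (H - {L}) (E - {{L, P}}) q" "hd q = (if hd p = L then P else hd p)" "last q = last p"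
      using walk_avoid[OF p(1) uniq LP] p y by auto
    then show "\<exists>p. gwalk (H - {L}) (E - {{L, P}}) p \<and> hd p = x \<and> last p = y" using p x by auto
  qed
  have c5: "card (E - {{L, P}}) + 1 = card (H - {L})"
  proof -
    have "card (E - {{L, P}}) = card E - 1" using eLP fE by simp
    moreover have "card (H - {L}) = card H - 1" using LH fH by simp
    moreover have "card E + 1 = card H" using tree_parts(5)[OF T] .
    moreover have "card E \<ge> 1" using c2 tree_parts(5)[OF T] by simp
    ultimately show "card (E - {{L, P}}) + 1 = card (H - {L})" by simp
  qed
  have "is_tree (H - {L}) (E - {{L, P}})"
    unfolding is_tree_def by (intro conjI; fact)
  then show "is_join_tree (H - {L}) (E - {{L, P}})"
    unfolding is_join_tree_def
  proof (intro conjI allI ballI impI)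
    fix a X Y assume X: "X \<in> H - {L}" and Y: "Y \<in> H - {L}" and aXY: "a \<in> X \<and> a \<in> Y"
    obtain p where p: "gwalk {Z\<in>H. a \<in> Z} E p" "hd p = X" "last p = Y" using jp X Y aXY by blast
    obtain q where q: "gwalk ({Z\<in>H. a \<in> Z} - {L}) (E - {{L, P}}) q" "hd q = (if hd p = L then P else hd p)" "last q = last p"
      using walk_avoid[OF p(1) uniq LP] p Y by auto
    have "{Z\<in>H. a \<in> Z} - {L} = {Z\<in>H - {L}. a \<in> Z}" by blast
    then show "\<exists>p. gwalk {Z\<in>H - {L}. a \<in> Z} (E - {{L, P}}) p \<and> hd p = X \<and> last p = Y"
      using q p X by auto
  qed simp
next
  fix a Z assume aL: "a \<in> L" and Z: "Z \<in> H - {L}" and aZ: "a \<in> Z"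
  have jp: "\<exists>p. gwalk {Z\<in>H. a \<in> Z} E p \<and> hd p = L \<and> last p = Z"
    using J LH Z aL aZ unfolding is_join_tree_def by blast
  then obtain p where p: "gwalk {Z\<in>H. a \<in> Z} E p" "hd p = L" "last p = Z" by blast
  then obtain q where pq: "p = L # q" by (cases p) auto
  then have "q \<noteq> []" using p Z by auto
  moreover have "gwalk {Z\<in>H. a \<in> Z} E (L # q)" using p(1) pq by simp
  ultimately have e: "{L, hd q} \<in> E" and gq: "gwalk {Z\<in>H. a \<in> Z} E q"
    using gwalk_Cons[of "{Z\<in>H. a \<in> Z}" E L q] by auto
  have hq: "hd q \<in> {Z\<in>H. a \<in> Z}" using gwalk_hd[OF gq] .
  have "{L, hd q} = {L, P}" using uniq[rule_format, OF e] by simp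
  then have "hd q = P" using LP by (auto simp: doubleton_eq_iff)
  then show "a \<in> P" using hq by simp
qed

lemma add_ear:
  assumes J: "is_join_tree H' E'" and YH: "Y \<notin> H'" and XH: "X \<in> H'"
    and ear: "\<forall>a\<in>Y. (\<exists>Z\<in>H'. a \<in> Z) \<longrightarrow> a \<in> X"
  shows "is_join_tree (insert Y H') (insert {Y, X} E')"
proof -
  have T: "is_tree H' E'" using J unfolding is_join_tree_def by blast
  have jp: "\<And>a A B. A \<in> H' \<Longrightarrow> B \<in> H' \<Longrightarrow> a \<in> A \<Longrightarrow> a \<in> B \<Longrightarrow> \<exists>p. gwalk {Z\<in>H'. a \<in> Z} E' p \<and> hd p = A \<and> last p = B"
    using J unfolding is_join_tree_def by blast
  have fH: "finite H'" using tree_parts(1)[OF T] .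
  have fE: "finite E'" using tree_finE[OF T] .
  have YX: "Y \<noteq> X" using YH XH by blast
  let ?H = "insert Y H'" and ?E = "insert {Y, X} E'"
  have mono: "gwalk V' ?E p" if "gwalk V E' p" "V \<subseteq> V'" for V V' p
    using gwalk_mono[OF that] by blast
  have "is_tree ?H ?E"
    unfolding is_tree_def
  proof (intro conjI ballI)
    show "finite ?H" using fH by simp
    show "?H \<noteq> {}" by simp
    show "?E \<subseteq> {{x, y} |x y. x \<in> ?H \<and> y \<in> ?H \<and> x \<noteq> y}"
    proof
      fix e assume "e \<in> ?E"
      then have "e = {Y, X} \<or> e \<in> E'" by simp
      then show "e \<in> {{x, y} |x y. x \<in> ?H \<and> y \<in> ?H \<and> x \<noteq> y}"
      proof
        assume "e = {Y, X}" then show ?thesis using XH YX by blast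
      next
        assume "e \<in> E'"
        then obtain x y where "e = {x, y}" "x \<in> H'" "y \<in> H'" "x \<noteq> y" by (rule tree_edge[OF T])
        then show ?thesis by blast
      qed
    qed
    fix x y assume x: "x \<in> ?H" and y: "y \<in> ?H"
    show "\<exists>p. gwalk ?H ?E p \<and> hd p = x \<and> last p = y"
    proof (rule conn_insert[OF _ _ _ x y])
      fix u v assume "u \<in> H'" "v \<in> H'"
      then obtain p where "gwalk H' E' p" "hd p = u" "last p = v" using tree_parts(4)[OF T] by blast
      then show "\<exists>p. gwalk ?H ?E p \<and> hd p = u \<and> last p = v" using mono[of H' p ?H] by blast
    next
      show "Y \<in> ?H" by simp
    next
      fix v assume "v \<in> H'"
      then obtain p where p: "gwalk H' E' p" "hd p = X" "last p = v" using tree_parts(4)[OF T] XH by blast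
      have pne: "p \<noteq> []" using p by auto
      have "gwalk ?H ?E p" using mono[OF p(1)] by blast
      then have "gwalk ?H ?E (Y # p)" using gwalk_Cons[of ?H ?E Y p] p pne by simp
      then show "\<exists>p. gwalk ?H ?E p \<and> hd p = Y \<and> last p = v" using p pne by (intro exI[of _ "Y # p"]) simp
    qed
  next
    have "{Y, X} \<notin> E'"
    proof
      assume "{Y, X} \<in> E'"
      then obtain x y where "{Y, X} = {x, y}" "x \<in> H'" "y \<in> H'" "x \<noteq> y" by (rule tree_edge[OF T])
      then show False using YH by (auto simp: doubleton_eq_iff)
    qed
    then have "card ?E = card E' + 1" using fE by simp
    moreover have "card ?H = card H' + 1" using fH YH by simp
    ultimately show "card ?E + 1 = card ?H" using tree_parts(5)[OF T] by simp
  qed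
  then show ?thesis
    unfolding is_join_tree_def
  proof (intro conjI allI ballI impI)
    fix a A B assume A: "A \<in> ?H" and B: "B \<in> ?H" and aAB: "a \<in> A \<and> a \<in> B"
    show "\<exists>p. gwalk {Z\<in>?H. a \<in> Z} ?E p \<and> hd p = A \<and> last p = B"
    proof (cases "a \<in> Y")
      case False
      then have AB: "A \<in> H'" "B \<in> H'" using A B aAB by auto
      obtain p where p: "gwalk {Z\<in>H'. a \<in> Z} E' p" "hd p = A" "last p = B" using jp[OF AB] aAB by blast
      have "{Z\<in>H'. a \<in> Z} \<subseteq> {Z\<in>?H. a \<in> Z}" by blast
      then show ?thesis using mono[OF p(1)] p by blast
    next
      case True
      have eqS: "{Z\<in>?H. a \<in> Z} = insert Y {Z\<in>H'. a \<in> Z}" using True by blast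
      have sub: "{Z\<in>H'. a \<in> Z} \<subseteq> {Z\<in>?H. a \<in> Z}" by blast
      have AS: "A \<in> insert Y {Z\<in>H'. a \<in> Z}" and BS: "B \<in> insert Y {Z\<in>H'. a \<in> Z}" using A B aAB by auto
      have "\<exists>p. gwalk {Z\<in>?H. a \<in> Z} ?E p \<and> hd p = A \<and> last p = B"
      proof (rule conn_insert[OF _ _ _ AS BS])
        fix u v assume "u \<in> {Z\<in>H'. a \<in> Z}" "v \<in> {Z\<in>H'. a \<in> Z}"
        then obtain p where "gwalk {Z\<in>H'. a \<in> Z} E' p" "hd p = u" "last p = v" using jp by blast
        then show "\<exists>p. gwalk {Z\<in>?H. a \<in> Z} ?E p \<and> hd p = u \<and> last p = v" using mono[OF _ sub] by blast
      next
        show "Y \<in> {Z\<in>?H. a \<in> Z}" using True by simp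
      next
        fix v assume v: "v \<in> {Z\<in>H'. a \<in> Z}"
        then have aX: "a \<in> X" using ear True by blast
        obtain p where p: "gwalk {Z\<in>H'. a \<in> Z} E' p" "hd p = X" "last p = v" using jp[of X v a] XH aX v by blast
        have pne: "p \<noteq> []" using p by auto
        have "gwalk {Z\<in>?H. a \<in> Z} ?E p" using mono[OF p(1) sub] .
        then have "gwalk {Z\<in>?H. a \<in> Z} ?E (Y # p)" using gwalk_Cons[of _ ?E Y p] p pne True by simp
        then show "\<exists>p. gwalk {Z\<in>?H. a \<in> Z} ?E p \<and> hd p = Y \<and> last p = v" using p pne by (intro exI[of _ "Y # p"]) simp
      qed
      then show ?thesis .
    qed
  qed simp
qed

lemma marg_marg:
  assumes "finite {r. W r \<noteq> 0}" "Z \<subseteq> Y"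
  shows "marg (marg W Y) Z = marg W Z"
proof -
  have "marg (marg W Y) Z = push ((\<lambda>r. restrict r Z) \<circ> (\<lambda>r. restrict r Y)) W"
    unfolding marg_push by (rule push_push[OF assms(1)])
  also have "\<dots> = push (\<lambda>r. restrict r Z) W"
  proof (rule push_cong)
    fix r show "((\<lambda>r. restrict r Z) \<circ> (\<lambda>r. restrict r Y)) r = restrict r Z"
      using assms(2) by (simp add: restrict_restrict Int_absorb1 inf_commute)
  qed
  finally show ?thesis unfolding marg_push .
qed

lemma krel_parts:
  assumes "krel C X R"
  shows "\<And>t. R t \<in> C" "finite {t. R t \<noteq> 0}" "\<And>t. R t \<noteq> 0 \<Longrightarrow> t \<in> extensional X"
  using assms unfolding krel_def by blast+

lemma marg_self:
  assumes "krel C X R"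
  shows "marg R X = R"
  unfolding marg_push
  by (rule push_id) (use krel_parts(3)[OF assms] in \<open>simp add: extensional_restrict\<close>)

lemma free_global:
  fixes Rs :: "'a set \<Rightarrow> ('a \<Rightarrow> 'v) \<Rightarrow> 'k::comm_monoid_add multiset"
  shows "\<forall>H E. card H = n \<longrightarrow> is_join_tree H E \<longrightarrow> (\<forall>X\<in>H. krel free_carrier X (Rs X))
     \<longrightarrow> pairwise_consistent free_carrier H Rs \<longrightarrow> globally_consistent free_carrier H Rs"
proof (induction n rule: less_induct)
  case (less n)
  show ?case
  proof (intro allI impI)
    fix H :: "'a set set" and E
    assume cH: "card H = n" and J: "is_join_tree H E" and kr: "\<forall>X\<in>H. krel free_carrier X (Rs X)"
      and pc: "pairwise_consistent free_carrier H Rs"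
    have T: "is_tree H E" using J unfolding is_join_tree_def by simp
    have fH: "finite H" and neH: "H \<noteq> {}" using tree_parts[OF T] by simp_all
    have c1: "card H \<ge> 1" using fH neH by (simp add: Suc_le_eq card_gt_0_iff)
    show "globally_consistent free_carrier H Rs"
    proof (cases "card H = 1")
      case True
      then obtain X where HX: "H = {X}" by (metis card_1_singletonE)
      have k: "krel free_carrier X (Rs X)" using kr HX by simp
      show ?thesis unfolding globally_consistent_def HX
        using k marg_self[OF k] by (intro exI[of _ "Rs X"]) simp
    next
      case False
      then have c2: "card H \<ge> 2" using c1 by simp
      obtain L P where LH: "L \<in> H" and PH: "P \<in> H" and LP: "L \<noteq> P" and eLP: "{L, P} \<in> E"
        and uniq: "\<forall>e\<in>E. L \<in> e \<longrightarrow> e = {L, P}"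
        using tree_leaf[OF T c2] by blast
      note RL = remove_leaf[OF J c2 LH LP eLP uniq]
      define H' where "H' = H - {L}"
      have cH': "card H' < n" using cH fH LH c1 unfolding H'_def by simp
      have J': "is_join_tree H' (E - {{L, P}})" unfolding H'_def by (rule RL(1))
      have kr': "\<forall>X\<in>H'. krel free_carrier X (Rs X)" using kr unfolding H'_def by simp
      have pc': "pairwise_consistent free_carrier H' Rs" using pc unfolding pairwise_consistent_def H'_def by simp
      have "globally_consistent free_carrier H' Rs"
        using less.IH[OF cH', rule_format, OF refl J' kr'[rule_format] pc'] .
      then obtain W' where kW': "krel free_carrier (\<Union>H') W'" and mW': "\<forall>Z\<in>H'. marg W' Z = Rs Z"
        unfolding globally_consistent_def by blast
      define U where "U = \<Union>H'"
      have PH': "P \<in> H'" using PH LP unfolding H'_def by simp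
      have IP: "U \<inter> L \<subseteq> P"
      proof
        fix a assume "a \<in> U \<inter> L"
        then obtain Z where "Z \<in> H'" "a \<in> Z" "a \<in> L" unfolding U_def by blast
        then show "a \<in> P" using RL(2) unfolding H'_def by blast
      qed
      have PU: "P \<subseteq> U" using PH' unfolding U_def by blast
      obtain WLP where kWLP: "krel free_carrier (L \<union> P) WLP" and mL: "marg WLP L = Rs L" and mP: "marg WLP P = Rs P"
        using pc LH PH unfolding pairwise_consistent_def by blast
      have fW': "finite {r. W' r \<noteq> 0}" using krel_parts(2)[OF kW'] .
      have fWLP: "finite {r. WLP r \<noteq> 0}" using krel_parts(2)[OF kWLP] .
      have kRL: "krel free_carrier L (Rs L)" using kr LH by simp
      have "marg W' (U \<inter> L) = marg (marg W' P) (U \<inter> L)" using marg_marg[OF fW' IP] by simp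
      also have "\<dots> = marg (Rs P) (U \<inter> L)" using mW' PH' by simp
      also have "\<dots> = marg WLP (U \<inter> L)" unfolding mP[symmetric] using marg_marg[OF fWLP IP] .
      also have "\<dots> = marg (marg WLP L) (U \<inter> L)" using marg_marg[OF fWLP, of "U \<inter> L" L] by simp
      also have "\<dots> = marg (Rs L) (U \<inter> L)" using mL by simp
      finally have meq: "marg W' (U \<inter> L) = marg (Rs L) (U \<inter> L)" .
      obtain W where fW: "finite {r. W r \<noteq> 0}" and eW: "\<forall>r. W r \<noteq> 0 \<longrightarrow> r \<in> extensional (U \<union> L)"
        and sW: "\<forall>r. set_mset (W r) \<subseteq> (\<Union>s. set_mset (W' s))" and mWU: "marg W U = W'" and mWL: "marg W L = Rs L"
        using glue_aux[where X=U and Y=L and n="size (tot W')", rule_format, OF refl fW' krel_parts(2)[OF kRL]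
            krel_parts(3)[OF kW'[unfolded U_def[symmetric]]] krel_parts(3)[OF kRL] meq] by blast
      have UH: "\<Union>H = U \<union> L" unfolding U_def H'_def using LH by blast
      show ?thesis
        unfolding globally_consistent_def
      proof (intro exI conjI ballI)
        show "krel free_carrier (\<Union>H) W"
          unfolding krel_def
        proof (intro conjI allI impI)
          fix t
          have "0 \<notin># W' s" for s using krel_parts(1)[OF kW'] unfolding free_carrier_def by simp
          then have "0 \<notin> (\<Union>s. set_mset (W' s))" by simp
          then have "0 \<notin># W t" using sW by blast
          then show "W t \<in> free_carrier" unfolding free_carrier_def by simp
        next
          show "finite {r. W r \<noteq> 0}" by (rule fW)
        next
          fix t assume "W t \<noteq> 0"
          then show "t \<in> extensional (\<Union>H)" using eW UH by simp
        qed
      next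
        fix Z assume ZH: "Z \<in> H"
        show "marg W Z = Rs Z"
        proof (cases "Z = L")
          case True
          then show ?thesis using mWL by simp
        next
          case False
          then have ZH': "Z \<in> H'" using ZH unfolding H'_def by simp
          then have "Z \<subseteq> U" unfolding U_def by blast
          then have "marg W Z = marg (marg W U) Z" using marg_marg[OF fW] by simp
          then show ?thesis using mWU mW' ZH' by simp
        qed
      qed
    qed
  qed
qed

lemma free_hom_add: "free_hom (x + y) = free_hom x + free_hom y"
  unfolding free_hom_def by simp

lemma acyclic_lgc_free:
  assumes "hg_acyclic H"
  shows "lgc_up_to TYPE('v) (free_carrier :: 'k::comm_monoid_add multiset set) free_hom H"
  unfolding lgc_up_to_def
proof (intro allI impI)
  fix R :: "'a set \<Rightarrow> ('a \<Rightarrow> 'v) \<Rightarrow> 'k"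
  assume kR: "\<forall>X\<in>H. krel UNIV X (R X)"
    and ex: "\<exists>Rs. (\<forall>X\<in>H. krel free_carrier X (Rs X) \<and> (\<forall>t. free_hom (Rs X t) = R X t)) \<and>
              pairwise_consistent free_carrier H Rs"
  then obtain Rs where kRs: "\<forall>X\<in>H. krel free_carrier X (Rs X)" and hRs: "\<forall>X\<in>H. \<forall>t. free_hom (Rs X t) = R X t"
    and pc: "pairwise_consistent free_carrier H Rs" by blast
  show "globally_consistent UNIV H R"
  proof (cases "H = {}")
    case True
    show ?thesis unfolding globally_consistent_def True krel_def by (intro exI[of _ "\<lambda>_. 0"]) simp
  next
    case False
    then obtain E where J: "is_join_tree H E" using assms unfolding hg_acyclic_def by blast
    have "globally_consistent free_carrier H Rs"
      using free_global[rule_format, OF refl J kRs[rule_format] pc] .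
    then obtain W where kW: "krel free_carrier (\<Union>H) W" and mW: "\<forall>X\<in>H. marg W X = Rs X"
      unfolding globally_consistent_def by blast
    have fW: "finite {r. W r \<noteq> 0}" using krel_parts(2)[OF kW] .
    define W2 where "W2 = (\<lambda>r. free_hom (W r))"
    show ?thesis
      unfolding globally_consistent_def
    proof (intro exI conjI ballI)
      show "krel UNIV (\<Union>H) W2"
        unfolding krel_def
      proof (intro conjI allI impI)
        have "{r. W2 r \<noteq> 0} \<subseteq> {r. W r \<noteq> 0}" unfolding W2_def free_hom_def by auto
        then show "finite {r. W2 r \<noteq> 0}" using fW finite_subset by blast
      next
        fix t assume "W2 t \<noteq> 0"
        then have "W t \<noteq> 0" unfolding W2_def free_hom_def by auto
        then show "t \<in> extensional (\<Union>H)" using krel_parts(3)[OF kW] by blast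
      qed simp
    next
      fix X assume XH: "X \<in> H"
      show "marg W2 X = R X"
      proof
        fix t
        have "marg W2 X t = free_hom (marg W X t)"
          unfolding marg_push W2_def
          by (rule push_hom[symmetric, of free_hom UNIV]) (simp_all add: free_hom_add fW, simp add: free_hom_def)
        then show "marg W2 X t = R X t" using mW XH hRs by simp
      qed
    qed
  qed
qed

lemma marg_marg':
  assumes "finite {r. W r \<noteq> 0}"
  shows "marg (marg W A) B = marg W (A \<inter> B)"
proof -
  have "marg (marg W A) B = push ((\<lambda>r. restrict r B) \<circ> (\<lambda>r. restrict r A)) W"
    unfolding marg_push by (rule push_push[OF assms(1)])
  also have "\<dots> = push (\<lambda>r. restrict r (A \<inter> B)) W"
    by (rule push_cong) (simp add: restrict_restrict)
  finally show ?thesis unfolding marg_push .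
qed

lemma krel_mono:
  assumes "krel C A R" "A \<subseteq> B"
  shows "krel C B R"
  using assms unfolding krel_def extensional_def by blast

lemma marg_krel:
  assumes "krel C A R" "0 \<in> C" "\<forall>x\<in>C. \<forall>y\<in>C. x + y \<in> C"
  shows "krel C B (marg R B)"
  unfolding marg_push
  by (rule push_krel[OF assms(2,3) krel_parts(1,2)[OF assms(1)]]) simp

lemma ear_lgc:
  fixes C :: "'c::comm_monoid_add set" and h :: "'c \<Rightarrow> 'k::comm_monoid_add"
  assumes C0: "0 \<in> C" and Cp: "\<forall>x\<in>C. \<forall>y\<in>C. x + y \<in> C" and h0: "h 0 = 0"
    and hp: "\<forall>x\<in>C. \<forall>y\<in>C. h (x + y) = h x + h y"
    and XH: "X \<in> H" and YH: "Y \<in> H" and XY: "X \<noteq> Y"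
    and ear: "\<forall>a\<in>Y. (\<exists>Z\<in>H. Z \<noteq> Y \<and> a \<in> Z) \<longrightarrow> a \<in> X"
    and lgc: "lgc_up_to TYPE('v) C h H"
  shows "lgc_up_to TYPE('v) C h (H - {Y})"
  unfolding lgc_up_to_def
proof (intro allI impI)
  fix R' :: "'a set \<Rightarrow> ('a \<Rightarrow> 'v) \<Rightarrow> 'k"
  assume kR': "\<forall>Z\<in>H - {Y}. krel UNIV Z (R' Z)"
    and ex: "\<exists>Rs. (\<forall>Z\<in>H - {Y}. krel C Z (Rs Z) \<and> (\<forall>t. h (Rs Z t) = R' Z t)) \<and>
              pairwise_consistent C (H - {Y}) Rs"
  obtain Rs' where h1: "\<forall>Z\<in>H - {Y}. krel C Z (Rs' Z) \<and> (\<forall>t. h (Rs' Z t) = R' Z t)"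
    and pc': "pairwise_consistent C (H - {Y}) Rs'"
    by (rule exE[OF ex], erule conjE, rule that, assumption+)
  have kRs': "\<forall>Z\<in>H - {Y}. krel C Z (Rs' Z)" using h1 by simp
  have hRs': "\<forall>Z\<in>H - {Y}. \<forall>t. h (Rs' Z t) = R' Z t" using h1 by simp
  define I where "I = X \<inter> Y"
  define H' where "H' = H - {Y}"
  have XH': "X \<in> H'" using XH XY unfolding H'_def by simp
  have kX: "krel C X (Rs' X)" using kRs' XH' unfolding H'_def by simp
  have kRX: "krel UNIV X (R' X)" using kR' XH' unfolding H'_def by simp
  have fX: "finite {r. Rs' X r \<noteq> 0}" using krel_parts(2)[OF kX] .
  define Rs where "Rs = Rs'(Y := marg (Rs' X) I)"
  define R where "R = R'(Y := marg (R' X) I)"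
  have RsZ: "Rs Z = Rs' Z" "R Z = R' Z" if "Z \<in> H'" for Z using that unfolding Rs_def R_def H'_def by auto
  have kY: "krel C Y (Rs Y)"
    unfolding Rs_def using krel_mono[OF marg_krel[OF kX C0 Cp, of I]] I_def by simp
  have kRY: "krel UNIV Y (R Y)"
    unfolding R_def using krel_mono[OF marg_krel[OF kRX, of I]] I_def by simp
  have hRX: "(\<lambda>r. h (Rs' X r)) = R' X" using hRs' XH' unfolding H'_def by auto
  have hY: "h (Rs Y t) = R Y t" for t
  proof -
    have "h (Rs Y t) = push (\<lambda>r. restrict r I) (\<lambda>r. h (Rs' X r)) t"
      unfolding Rs_def marg_push by simp (rule push_hom[OF h0 hp C0 Cp krel_parts(1)[OF kX] fX])
    then show ?thesis unfolding R_def marg_push hRX by simp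
  qed
  have pcYZ: "\<exists>W. krel C (Y \<union> Z) W \<and> marg W Y = Rs Y \<and> marg W Z = Rs Z" if ZH': "Z \<in> H'" for Z
  proof -
    obtain WXZ where kW: "krel C (X \<union> Z) WXZ" and mX: "marg WXZ X = Rs' X" and mZ: "marg WXZ Z = Rs' Z"
      using pc' XH' ZH' unfolding pairwise_consistent_def H'_def by blast
    have fW: "finite {r. WXZ r \<noteq> 0}" using krel_parts(2)[OF kW] .
    have ZY: "Z \<inter> Y \<subseteq> I"
    proof
      fix a assume a: "a \<in> Z \<inter> Y"
      have "Z \<noteq> Y" using ZH' unfolding H'_def by simp
      moreover have "Z \<in> H" using ZH' unfolding H'_def by simp
      ultimately have "a \<in> X" using ear a by blast
      then show "a \<in> I" using a unfolding I_def by simp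
    qed
    define W where "W = marg WXZ (I \<union> Z)"
    have "krel C (I \<union> Z) W" unfolding W_def by (rule marg_krel[OF kW C0 Cp])
    then have kW2: "krel C (Y \<union> Z) W" by (rule krel_mono) (auto simp: I_def)
    have "marg W Y = marg WXZ ((I \<union> Z) \<inter> Y)" unfolding W_def by (rule marg_marg'[OF fW])
    also have "(I \<union> Z) \<inter> Y = X \<inter> I" using ZY unfolding I_def by blast
    also have "marg WXZ (X \<inter> I) = marg (marg WXZ X) I" by (rule marg_marg'[OF fW, symmetric])
    also have "\<dots> = Rs Y" unfolding Rs_def using mX by simp
    finally have mY': "marg W Y = Rs Y" .
    have "marg W Z = marg WXZ ((I \<union> Z) \<inter> Z)" unfolding W_def by (rule marg_marg'[OF fW])
    also have "(I \<union> Z) \<inter> Z = Z" by blast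
    finally have mZ': "marg W Z = Rs Z" using mZ RsZ[OF ZH'] by simp
    show ?thesis using kW2 mY' mZ' by blast
  qed
  have pc: "pairwise_consistent C H Rs"
    unfolding pairwise_consistent_def
  proof (intro ballI)
    fix A B assume A: "A \<in> H" and B: "B \<in> H"
    show "\<exists>W. krel C (A \<union> B) W \<and> marg W A = Rs A \<and> marg W B = Rs B"
    proof (cases "A = Y")
      case True
      show ?thesis
      proof (cases "B = Y")
        case True
        then show ?thesis using \<open>A = Y\<close> kY marg_self[OF kY] by (intro exI[of _ "Rs Y"]) simp
      next
        case False
        then have "B \<in> H'" using B unfolding H'_def by simp
        then show ?thesis using pcYZ \<open>A = Y\<close> by simp
      qed
    next
      case AY: False
      then have AH': "A \<in> H'" using A unfolding H'_def by simp
      show ?thesis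
      proof (cases "B = Y")
        case True
        obtain W where "krel C (Y \<union> A) W" "marg W Y = Rs Y" "marg W A = Rs A" using pcYZ[OF AH'] by blast
        then show ?thesis using True by (intro exI[of _ W]) (simp add: Un_commute)
      next
        case False
        then have BH': "B \<in> H'" using B unfolding H'_def by simp
        obtain W where "krel C (A \<union> B) W" "marg W A = Rs' A" "marg W B = Rs' B"
          using pc' AH' BH' unfolding pairwise_consistent_def H'_def by blast
        then show ?thesis using RsZ[OF AH'] RsZ[OF BH'] by (intro exI[of _ W]) simp
      qed
    qed
  qed
  have kRall: "\<forall>Z\<in>H. krel UNIV Z (R Z)"
  proof
    fix Z assume "Z \<in> H"
    then show "krel UNIV Z (R Z)" using kRY kR' RsZ unfolding H'_def by (cases "Z = Y") auto
  qed
  have exRs: "\<exists>Rs. (\<forall>Z\<in>H. krel C Z (Rs Z) \<and> (\<forall>t. h (Rs Z t) = R Z t)) \<and> pairwise_consistent C H Rs"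
  proof (intro exI conjI ballI allI)
    fix Z assume Z: "Z \<in> H"
    show "krel C Z (Rs Z)"
    proof (cases "Z = Y")
      case True then show ?thesis using kY by simp
    next
      case False then have "Z \<in> H'" using Z unfolding H'_def by simp
      then show ?thesis using kRs' RsZ unfolding H'_def by simp
    qed
    fix t
    show "h (Rs Z t) = R Z t"
    proof (cases "Z = Y")
      case True then show ?thesis using hY by simp
    next
      case False then have "Z \<in> H'" using Z unfolding H'_def by simp
      then show ?thesis using hRs' RsZ unfolding H'_def by simp
    qed
  next
    show "pairwise_consistent C H Rs" by (rule pc)
  qed
  have "globally_consistent UNIV H R"
    using lgc unfolding lgc_up_to_def using kRall exRs by blast
  then obtain W where kW: "krel UNIV (\<Union>H) W" and mW: "\<forall>Z\<in>H. marg W Z = R Z"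
    unfolding globally_consistent_def by blast
  have fW: "finite {r. W r \<noteq> 0}" using krel_parts(2)[OF kW] .
  show "globally_consistent UNIV (H - {Y}) R'"
    unfolding globally_consistent_def
  proof (intro exI conjI ballI)
    show "krel UNIV (\<Union>(H - {Y})) (marg W (\<Union>(H - {Y})))" by (rule marg_krel[OF kW]) simp_all
  next
    fix Z assume Z: "Z \<in> H - {Y}"
    have "marg (marg W (\<Union>(H - {Y}))) Z = marg W (\<Union>(H - {Y}) \<inter> Z)" by (rule marg_marg'[OF fW])
    also have "\<Union>(H - {Y}) \<inter> Z = Z" using Z by blast
    also have "marg W Z = R Z" using mW Z by simp
    also have "\<dots> = R' Z" using RsZ Z unfolding H'_def by simp
    finally show "marg (marg W (\<Union>(H - {Y}))) Z = R' Z" .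
  qed
qed

definition sd :: "'x set \<Rightarrow> 'x set \<Rightarrow> 'x set" where
  "sd S T = (S - T) \<union> (T - S)"

lemma sd_even:
  assumes "finite S" "finite T"
  shows "even (card (sd S T)) \<longleftrightarrow> (even (card S) \<longleftrightarrow> even (card T))"
proof -
  have a: "card (S - T) + card (S \<inter> T) = card S"
  proof -
    have "S = (S - T) \<union> (S \<inter> T)" by blast
    moreover have "card ((S - T) \<union> (S \<inter> T)) = card (S - T) + card (S \<inter> T)"
      by (rule card_Un_disjoint) (use assms in auto)
    ultimately show ?thesis by simp
  qed
  have b: "card (T - S) + card (S \<inter> T) = card T"
  proof -
    have "T = (T - S) \<union> (S \<inter> T)" by blast
    moreover have "card ((T - S) \<union> (S \<inter> T)) = card (T - S) + card (S \<inter> T)"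
      by (rule card_Un_disjoint) (use assms in auto)
    ultimately show ?thesis by simp
  qed
  have c: "card (sd S T) = card (S - T) + card (T - S)"
    unfolding sd_def by (rule card_Un_disjoint) (use assms in auto)
  have "card (sd S T) + 2 * card (S \<inter> T) = card S + card T" using a b c by simp
  then show ?thesis by presburger
qed

lemma card_split:
  assumes "finite A" "u \<in> A"
  shows "card {v\<in>A. p v} = card {v\<in>A - {u}. p v} + (if p u then 1 else 0)"
proof (cases "p u")
  case True
  have "{v\<in>A. p v} = insert u {v\<in>A - {u}. p v}" using True assms(2) by blast
  moreover have "card (insert u {v\<in>A - {u}. p v}) = Suc (card {v\<in>A - {u}. p v})"
    by (rule card_insert_disjoint) (use assms(1) in auto)
  ultimately show ?thesis using True by simp
next
  case False
  have "{v\<in>A. p v} = {v\<in>A - {u}. p v}" using False by blast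
  then show ?thesis using False by simp
qed

locale parity =
  fixes H :: "'a set set" and enc :: "'a set set \<Rightarrow> 'v" and X0 :: "'a set"
  assumes finH: "finite H" and efin: "\<forall>X\<in>H. finite X" and inj: "inj_on enc (Pow H)" and X0H: "X0 \<in> H"
begin

definition "V = \<Union>H"
definition "Ev v = {Z\<in>H. v \<in> Z}"
definition "D v = {S. S \<subseteq> Ev v \<and> even (card S)}"
definition "dec = inv_into (Pow H) enc"
definition "G = PiE V (\<lambda>v. enc ` D v)"
definition "N Z g = card {v\<in>Z. Z \<in> dec (g v)}"
definition "P Z g = (odd (N Z g) \<longleftrightarrow> Z = X0)"
definition "flp u A B g = g(u := enc (sd (dec (g u)) {A, B}))"

lemma finV: "finite V"
  unfolding V_def using finH efin by blast

lemma dec_enc: "S \<in> Pow H \<Longrightarrow> dec (enc S) = S"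
  unfolding dec_def using inj by (simp add: inv_into_f_f)

lemma D_Pow: "S \<in> D v \<Longrightarrow> S \<in> Pow H"
  unfolding D_def Ev_def by auto

lemma finD: "finite (D v)"
proof -
  have "D v \<subseteq> Pow H" using D_Pow by blast
  then show ?thesis using finH finite_subset by blast
qed

lemma finG: "finite G"
  unfolding G_def by (rule finite_PiE[OF finV]) (simp add: finD)

lemma G_ext: "g \<in> G \<Longrightarrow> g \<in> extensional V"
  unfolding G_def by (simp add: PiE_iff)

lemma G_val: "g \<in> G \<Longrightarrow> v \<in> V \<Longrightarrow> g v \<in> enc ` D v"
  unfolding G_def by (simp add: PiE_iff)

lemma G_dec: "g \<in> G \<Longrightarrow> v \<in> V \<Longrightarrow> dec (g v) \<in> D v"
proof -
  assume "g \<in> G" "v \<in> V"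
  then obtain S where "S \<in> D v" "g v = enc S" using G_val by blast
  then show "dec (g v) \<in> D v" using dec_enc D_Pow by simp
qed

lemma G_iff: "g \<in> G \<longleftrightarrow> g \<in> extensional V \<and> (\<forall>v\<in>V. g v \<in> enc ` D v)"
  unfolding G_def by (auto simp: PiE_iff)

lemma N_cong: "(\<And>v. v \<in> Z \<Longrightarrow> g v = g' v) \<Longrightarrow> N Z g = N Z g'"
  unfolding N_def by (metis (mono_tags, lifting) Collect_cong)

lemma P_cong: "(\<And>v. v \<in> Z \<Longrightarrow> g v = g' v) \<Longrightarrow> P Z g = P Z g'"
  unfolding P_def using N_cong by metis

context
  fixes u A B
  assumes AH: "A \<in> H" and BH: "B \<in> H" and AB: "A \<noteq> B" and uA: "u \<in> A" and uB: "u \<in> B"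
begin

lemma uV: "u \<in> V" unfolding V_def using AH uA by blast

lemma sd_Pow: "g \<in> G \<Longrightarrow> sd (dec (g u)) {A, B} \<in> D u"
proof -
  assume g: "g \<in> G"
  have d: "dec (g u) \<in> D u" by (rule G_dec[OF g uV])
  then have sub: "dec (g u) \<subseteq> Ev u" and ev: "even (card (dec (g u)))" unfolding D_def by auto
  have "{A, B} \<subseteq> Ev u" unfolding Ev_def using AH BH uA uB by auto
  then have "sd (dec (g u)) {A, B} \<subseteq> Ev u" using sub unfolding sd_def by blast
  moreover have "finite (dec (g u))" using D_Pow[OF d] finH finite_subset by blast
  moreover have "even (card {A, B})" using AB by simp
  ultimately show ?thesis using sd_even[of "dec (g u)" "{A, B}"] ev unfolding D_def by simp
qed

lemma flp_G: "g \<in> G \<Longrightarrow> flp u A B g \<in> G"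
proof -
  assume g: "g \<in> G"
  show "flp u A B g \<in> G"
    unfolding G_iff
  proof (intro conjI ballI)
    show "flp u A B g \<in> extensional V" using G_ext[OF g] uV unfolding flp_def extensional_def by auto
  next
    fix v assume v: "v \<in> V"
    show "flp u A B g v \<in> enc ` D v"
    proof (cases "v = u")
      case True
      then show ?thesis using sd_Pow[OF g] unfolding flp_def by simp
    next
      case False
      then show ?thesis using G_val[OF g v] unfolding flp_def by simp
    qed
  qed
qed

lemma flp_dec_u: "g \<in> G \<Longrightarrow> dec (flp u A B g u) = sd (dec (g u)) {A, B}"
proof -
  assume g: "g \<in> G"
  show ?thesis unfolding flp_def using dec_enc[OF D_Pow[OF sd_Pow[OF g]]] by simp
qed

lemma flp_flp: "g \<in> G \<Longrightarrow> flp u A B (flp u A B g) = g"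
proof -
  assume g: "g \<in> G"
  have "sd (sd (dec (g u)) {A, B}) {A, B} = dec (g u)" unfolding sd_def by blast
  then have "enc (sd (dec (flp u A B g u)) {A, B}) = enc (dec (g u))" using flp_dec_u[OF g] by simp
  also have "enc (dec (g u)) = g u"
  proof -
    obtain S where "S \<in> D u" "g u = enc S" using G_val[OF g uV] by blast
    then show ?thesis using dec_enc D_Pow by simp
  qed
  finally show ?thesis unfolding flp_def[of u A B "flp u A B g"] by (simp add: flp_def)
qed

lemma flp_P: "g \<in> G \<Longrightarrow> P A (flp u A B g) \<longleftrightarrow> \<not> P A g"
proof -
  assume g: "g \<in> G"
  have fA: "finite A" using efin AH by simp
  have "A \<in> dec (flp u A B g u) \<longleftrightarrow> A \<notin> dec (g u)"
    using flp_dec_u[OF g] AB unfolding sd_def by auto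
  moreover have "{v\<in>A - {u}. A \<in> dec (flp u A B g v)} = {v\<in>A - {u}. A \<in> dec (g v)}"
    unfolding flp_def by auto
  moreover have "N A (flp u A B g) = card {v\<in>A - {u}. A \<in> dec (flp u A B g v)} + (if A \<in> dec (flp u A B g u) then 1 else 0)"
    unfolding N_def by (rule card_split[OF fA uA])
  moreover have "N A g = card {v\<in>A - {u}. A \<in> dec (g v)} + (if A \<in> dec (g u) then 1 else 0)"
    unfolding N_def by (rule card_split[OF fA uA])
  ultimately have "odd (N A (flp u A B g)) \<longleftrightarrow> \<not> odd (N A g)" by auto
  then show ?thesis unfolding P_def by blast
qed

lemma flp_other: "v \<noteq> u \<Longrightarrow> flp u A B g v = g v"
  unfolding flp_def by simp

end

definition F :: "'c::comm_monoid_add \<Rightarrow> 'a set \<Rightarrow> ('a \<Rightarrow> 'v) \<Rightarrow> 'c" where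
  "F c Z g = (if g \<in> G \<and> P Z g then c else 0)"

definition F2 :: "'c::comm_monoid_add \<Rightarrow> 'a set \<Rightarrow> 'a set \<Rightarrow> ('a \<Rightarrow> 'v) \<Rightarrow> 'c" where
  "F2 c A B g = (if g \<in> G \<and> P A g \<and> P B g then c + c else 0)"

lemma F2_sym: "F2 c A B = F2 c B A"
  unfolding F2_def by (intro ext) auto

lemma marg_F:
  "marg (F c Z) Y t = (\<Sum>g\<in>{g\<in>{g\<in>G. restrict g Y = t}. P Z g}. c)"
proof -
  have "marg (F c Z) Y t = (\<Sum>g\<in>{g\<in>G. restrict g Y = t}. F c Z g)"
    unfolding marg_push by (rule push_alt[OF finG]) (auto simp: F_def split: if_splits)
  also have "\<dots> = (\<Sum>g\<in>{g\<in>G. restrict g Y = t}. if P Z g then c else 0)"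
    by (rule sum.cong) (auto simp: F_def)
  also have "\<dots> = (\<Sum>g\<in>{g\<in>{g\<in>G. restrict g Y = t}. P Z g}. c)"
    by (rule sum.inter_filter[symmetric]) (use finG in simp)
  finally show ?thesis .
qed

lemma marg_F2:
  "marg (F2 c A B) Y t = (\<Sum>g\<in>{g\<in>{g\<in>{g\<in>G. restrict g Y = t}. P A g}. P B g}. c + c)"
proof -
  have "marg (F2 c A B) Y t = (\<Sum>g\<in>{g\<in>G. restrict g Y = t}. F2 c A B g)"
    unfolding marg_push by (rule push_alt[OF finG]) (auto simp: F2_def split: if_splits)
  also have "\<dots> = (\<Sum>g\<in>{g\<in>G. restrict g Y = t}. if P A g then (if P B g then c + c else 0) else 0)"
    by (rule sum.cong) (auto simp: F2_def)
  also have "\<dots> = (\<Sum>g\<in>{g\<in>{g\<in>G. restrict g Y = t}. P A g}. if P B g then c + c else 0)"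
    by (rule sum.inter_filter[symmetric]) (use finG in simp)
  also have "\<dots> = (\<Sum>g\<in>{g\<in>{g\<in>{g\<in>G. restrict g Y = t}. P A g}. P B g}. c + c)"
    by (rule sum.inter_filter[symmetric]) (use finG in simp)
  finally show ?thesis .
qed

lemma count:
  assumes AH: "A \<in> H" and BH: "B \<in> H" and AB: "A \<noteq> B" and uB: "u \<in> B" and uA: "u \<notin> A"
    and EH: "E \<in> H" and EB: "E \<noteq> B" and uE: "u \<in> E"
  shows "marg (F2 c A B) A = marg (F c A) A"
proof
  fix t
  define All where "All = {g\<in>{g\<in>G. restrict g A = t}. P A g}"
  define Good where "Good = {g\<in>All. P B g}"
  define Bad where "Bad = {g\<in>All. \<not> P B g}"
  have fAll: "finite All" unfolding All_def using finG by simp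
  let ?f = "flp u B E"
  have fG: "g \<in> G \<Longrightarrow> ?f g \<in> G" for g by (rule flp_G[OF BH EH EB[symmetric] uB uE])
  have ff: "g \<in> G \<Longrightarrow> ?f (?f g) = g" for g by (rule flp_flp[OF BH EH EB[symmetric] uB uE])
  have fP: "g \<in> G \<Longrightarrow> P B (?f g) \<longleftrightarrow> \<not> P B g" for g by (rule flp_P[OF BH EH EB[symmetric] uB uE])
  have fo: "v \<noteq> u \<Longrightarrow> ?f g v = g v" for g v by (rule flp_other[OF BH EH EB[symmetric] uB uE])
  have fo': "v \<in> A \<Longrightarrow> ?f g v = g v" for g v
  proof -
    assume "v \<in> A"
    then have "v \<noteq> u" using uA by blast
    then show ?thesis by (rule fo)
  qed
  have fr: "restrict (?f g) A = restrict g A" for g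
    unfolding restrict_def by (intro ext) (simp add: fo')
  have fPA: "P A (?f g) \<longleftrightarrow> P A g" for g
    by (rule P_cong) (rule fo')
  have bij: "bij_betw ?f Good Bad"
  proof (rule bij_betw_byWitness[where f' = ?f])
    show "\<forall>a\<in>Good. ?f (?f a) = a" unfolding Good_def All_def using ff by auto
    show "\<forall>a\<in>Bad. ?f (?f a) = a" unfolding Bad_def All_def using ff by auto
    show "?f ` Good \<subseteq> Bad" unfolding Good_def Bad_def All_def using fG fP fr fPA by auto
    show "?f ` Bad \<subseteq> Good" unfolding Good_def Bad_def All_def using fG fP fr fPA by auto
  qed
  have "marg (F2 c A B) A t = (\<Sum>g\<in>Good. c + c)" unfolding marg_F2 Good_def All_def ..
  also have "\<dots> = (\<Sum>g\<in>Good. c) + (\<Sum>g\<in>Good. c)" by (rule sum.distrib)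
  also have "\<dots> = (\<Sum>g\<in>Good. c) + (\<Sum>g\<in>Bad. c)"
    using sum.reindex_bij_betw[OF bij, of "\<lambda>_. c"] by simp
  also have "\<dots> = (\<Sum>g\<in>Good \<union> Bad. c)"
    by (rule sum.union_disjoint[symmetric]) (use fAll in \<open>auto simp: Good_def Bad_def\<close>)
  also have "Good \<union> Bad = All" unfolding Good_def Bad_def by blast
  also have "(\<Sum>g\<in>All. c) = marg (F c A) A t" unfolding marg_F All_def ..
  finally show "marg (F2 c A B) A t = marg (F c A) A t" .
qed

end

lemma krel_hom:
  assumes "krel C X R" "h 0 = 0"
  shows "krel UNIV X (\<lambda>t. h (R t))"
  unfolding krel_def
proof (intro conjI allI impI)
  have "{t. h (R t) \<noteq> 0} \<subseteq> {t. R t \<noteq> 0}" using assms(2) by auto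
  then show "finite {t. h (R t) \<noteq> 0}" using krel_parts(2)[OF assms(1)] finite_subset by blast
next
  fix t assume "h (R t) \<noteq> 0"
  then have "R t \<noteq> 0" using assms(2) by auto
  then show "t \<in> extensional X" using krel_parts(3)[OF assms(1)] by blast
qed simp

context parity
begin

lemma parity_contra:
  assumes rG: "r \<in> G" and PZ: "\<forall>Z\<in>H. P Z r"
  shows False
proof -
  define ind where "ind v Z = (if v \<in> Z \<and> Z \<in> dec (r v) then 1 else (0::nat))" for v Z
  have NZ: "N Z r = (\<Sum>v\<in>V. ind v Z)" if ZH: "Z \<in> H" for Z
  proof -
    have "Z \<subseteq> V" using ZH unfolding V_def by blast
    then have "{v\<in>Z. Z \<in> dec (r v)} = {v\<in>V. v \<in> Z \<and> Z \<in> dec (r v)}" by blast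
    then show ?thesis unfolding N_def ind_def using card_filter_sum[OF finV] by simp
  qed
  have cv: "card (dec (r v)) = (\<Sum>Z\<in>H. ind v Z)" if vV: "v \<in> V" for v
  proof -
    have "dec (r v) \<in> D v" by (rule G_dec[OF rG vV])
    then have "dec (r v) \<subseteq> Ev v" unfolding D_def by simp
    then have "{Z\<in>H. v \<in> Z \<and> Z \<in> dec (r v)} = dec (r v)" unfolding Ev_def by blast
    then show ?thesis unfolding ind_def using card_filter_sum[OF finH, of "\<lambda>Z. v \<in> Z \<and> Z \<in> dec (r v)"] by simp
  qed
  have "(\<Sum>Z\<in>H. N Z r) = (\<Sum>Z\<in>H. \<Sum>v\<in>V. ind v Z)" using NZ by simp
  also have "\<dots> = (\<Sum>v\<in>V. \<Sum>Z\<in>H. ind v Z)" by (rule sum.swap)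
  also have "\<dots> = (\<Sum>v\<in>V. card (dec (r v)))" using cv by simp
  finally have eqs: "(\<Sum>Z\<in>H. N Z r) = (\<Sum>v\<in>V. card (dec (r v)))" .
  have "{v\<in>V. odd (card (dec (r v)))} = {}"
  proof -
    have "even (card (dec (r v)))" if "v \<in> V" for v
      using G_dec[OF rG that] unfolding D_def by simp
    then show ?thesis by blast
  qed
  then have ev: "even (\<Sum>v\<in>V. card (dec (r v)))"
    using even_sum_iff[OF finV, of "\<lambda>v. card (dec (r v))"] by (simp only: card.empty) simp
  have "{Z\<in>H. odd (N Z r)} = {X0}" using PZ X0H unfolding P_def by blast
  then have od: "odd (\<Sum>Z\<in>H. N Z r)" using even_sum_iff[OF finH, of "\<lambda>Z. N Z r"] by simp
  show False using ev od eqs by simp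
qed

lemma not_lgc:
  fixes C :: "'c::comm_monoid_add set" and h :: "'c \<Rightarrow> 'k::comm_monoid_add"
  assumes K_pos: "pos_comm_monoid (UNIV :: 'k set)" and cov: "is_cover C h" and c2: "card H \<ge> 2"
    and noear: "\<forall>X\<in>H. \<forall>Y\<in>H. X \<noteq> Y \<longrightarrow> (\<exists>a\<in>Y. (\<exists>Z\<in>H. Z \<noteq> Y \<and> a \<in> Z) \<and> a \<notin> X)"
  shows "\<not> lgc_up_to TYPE('v) C h H"
proof
  assume lgc: "lgc_up_to TYPE('v) C h H"
  have posC: "pos_comm_monoid C" and h0: "h 0 = 0" and hp: "\<forall>x\<in>C. \<forall>y\<in>C. h (x + y) = h x + h y"
    and surj: "h ` C = UNIV" using cov unfolding is_cover_def by blast+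
  have C0: "0 \<in> C" and Cp: "\<forall>x\<in>C. \<forall>y\<in>C. x + y \<in> C" using pos_parts[OF posC] by blast+
  obtain k :: 'k where k0: "k \<noteq> 0"
  proof -
    obtain x y :: 'k where "x \<noteq> y" using K_pos unfolding pos_comm_monoid_def by blast
    then show ?thesis using that by (cases "x = 0") auto
  qed
  obtain c where cC: "c \<in> C" and hc: "h c = k" using surj by (metis UNIV_I imageE)
  have ccC: "c + c \<in> C" using Cp cC by blast
  have kF: "krel C V (F c Z)" for Z
    unfolding krel_def
  proof (intro conjI allI impI)
    fix t show "F c Z t \<in> C" unfolding F_def using cC C0 by simp
  next
    have "{t. F c Z t \<noteq> 0} \<subseteq> G" unfolding F_def by (auto split: if_splits)
    then show "finite {t. F c Z t \<noteq> 0}" using finG finite_subset by blast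
  next
    fix t assume "F c Z t \<noteq> 0"
    then have "t \<in> G" unfolding F_def by (auto split: if_splits)
    then show "t \<in> extensional V" by (rule G_ext)
  qed
  have kF2: "krel C V (F2 c A B)" for A B
    unfolding krel_def
  proof (intro conjI allI impI)
    fix t show "F2 c A B t \<in> C" unfolding F2_def using ccC C0 by simp
  next
    have "{t. F2 c A B t \<noteq> 0} \<subseteq> G" unfolding F2_def by (auto split: if_splits)
    then show "finite {t. F2 c A B t \<noteq> 0}" using finG finite_subset by blast
  next
    fix t assume "F2 c A B t \<noteq> 0"
    then have "t \<in> G" unfolding F2_def by (auto split: if_splits)
    then show "t \<in> extensional V" by (rule G_ext)
  qed
  define Rs where "Rs Z = marg (F c Z) Z" for Z
  define R where "R Z t = h (Rs Z t)" for Z t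
  have kRs: "krel C Z (Rs Z)" for Z unfolding Rs_def by (rule marg_krel[OF kF C0 Cp])
  have kR: "krel UNIV Z (R Z)" for Z unfolding R_def[abs_def] using krel_hom[where h=h, OF kRs[of Z] h0] by simp
  have pc: "pairwise_consistent C H Rs"
    unfolding pairwise_consistent_def
  proof (intro ballI)
    fix A B assume A: "A \<in> H" and B: "B \<in> H"
    show "\<exists>W. krel C (A \<union> B) W \<and> marg W A = Rs A \<and> marg W B = Rs B"
    proof (cases "A = B")
      case True
      then show ?thesis using kRs marg_self[OF kRs] by (intro exI[of _ "Rs A"]) simp
    next
      case False
      have fF2: "finite {r. F2 c A B r \<noteq> 0}" using krel_parts(2)[OF kF2] .
      obtain u E where uB: "u \<in> B" and EH: "E \<in> H" and EB: "E \<noteq> B" and uE: "u \<in> E" and uA: "u \<notin> A"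
        using noear A B False by blast
      obtain u' E' where uA': "u' \<in> A" and EH': "E' \<in> H" and EA': "E' \<noteq> A" and uE': "u' \<in> E'" and uB': "u' \<notin> B"
        using noear A B False by metis
      define W where "W = marg (F2 c A B) (A \<union> B)"
      have kW: "krel C (A \<union> B) W" unfolding W_def by (rule marg_krel[OF kF2 C0 Cp])
      have "marg W A = marg (F2 c A B) ((A \<union> B) \<inter> A)" unfolding W_def by (rule marg_marg'[OF fF2])
      also have "(A \<union> B) \<inter> A = A" by blast
      also have "marg (F2 c A B) A = marg (F c A) A" by (rule count[OF A B False uB uA EH EB uE])
      finally have mA: "marg W A = Rs A" unfolding Rs_def .
      have "marg W B = marg (F2 c A B) ((A \<union> B) \<inter> B)" unfolding W_def by (rule marg_marg'[OF fF2])
      also have "(A \<union> B) \<inter> B = B" by blast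
      also have "marg (F2 c A B) B = marg (F2 c B A) B" by (simp add: F2_sym)
      also have "\<dots> = marg (F c B) B" by (rule count[OF B A _ uA' uB' EH' EA' uE']) (use False in simp)
      finally have mB: "marg W B = Rs B" unfolding Rs_def .
      show ?thesis using kW mA mB by blast
    qed
  qed
  have ex: "\<exists>Rs. (\<forall>Z\<in>H. krel C Z (Rs Z) \<and> (\<forall>t. h (Rs Z t) = R Z t)) \<and> pairwise_consistent C H Rs"
    using kRs pc unfolding R_def by blast
  have "globally_consistent UNIV H R"
    using lgc kR ex unfolding lgc_up_to_def by blast
  then obtain W where kW: "krel UNIV (\<Union>H) W" and mW: "\<forall>Z\<in>H. marg W Z = R Z"
    unfolding globally_consistent_def by blast
  have fW: "finite {r. W r \<noteq> 0}" using krel_parts(2)[OF kW] .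
  have posK: "pos_comm_monoid (UNIV :: 'k set)" by (rule K_pos)
  have wU: "\<And>r. W r \<in> (UNIV :: 'k set)" by simp
  have g0G: "restrict (\<lambda>v. enc {}) V \<in> G"
    unfolding G_iff
  proof (intro conjI ballI)
    show "restrict (\<lambda>v. enc {}) V \<in> extensional V" by simp
    fix v assume "v \<in> V"
    moreover have "{} \<in> D v" unfolding D_def by simp
    ultimately show "restrict (\<lambda>v. enc {}) V v \<in> enc ` D v" by simp
  qed
  obtain g1 where g1G: "g1 \<in> G" and Pg1: "P X0 g1"
  proof (cases "P X0 (restrict (\<lambda>v. enc {}) V)")
    case True
    then show ?thesis using that g0G by blast
  next
    case False
    have "\<not> H \<subseteq> {X0}"
    proof
      assume "H \<subseteq> {X0}"
      then have "card H \<le> card {X0}" by (rule card_mono[rotated]) simp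
      then show False using c2 by simp
    qed
    then obtain Y where YH: "Y \<in> H" and YX: "Y \<noteq> X0" by blast
    obtain u E where uX: "u \<in> X0" and EH: "E \<in> H" and EX: "E \<noteq> X0" and uE: "u \<in> E"
      using noear YH X0H YX by metis
    let ?g = "flp u X0 E (restrict (\<lambda>v. enc {}) V)"
    have "?g \<in> G" by (rule flp_G[OF X0H EH EX[symmetric] uX uE g0G])
    moreover have "P X0 ?g" using flp_P[OF X0H EH EX[symmetric] uX uE g0G] False by simp
    ultimately show ?thesis using that by blast
  qed
  have fF: "finite {r. F c Z r \<noteq> 0}" for Z using krel_parts(2)[OF kF] .
  have Rpush: "R Z t = push (\<lambda>r. restrict r Z) (\<lambda>r. h (F c Z r)) t" for Z t
    unfolding R_def Rs_def marg_push by (rule push_hom[OF h0 hp C0 Cp krel_parts(1)[OF kF] fF])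
  have fhF: "finite {r. h (F c Z r) \<noteq> 0}" for Z
  proof -
    have "{r. h (F c Z r) \<noteq> 0} \<subseteq> {r. F c Z r \<noteq> 0}" using h0 by auto
    then show ?thesis using fF finite_subset by blast
  qed
  have "h (F c X0 g1) \<noteq> 0" unfolding F_def using g1G Pg1 hc k0 by simp
  then have "push (\<lambda>r. restrict r X0) (\<lambda>r. h (F c X0 r)) (restrict g1 X0) \<noteq> 0"
    using push_pos[OF posK _ fhF, of X0 g1 "\<lambda>r. restrict r X0"] by simp
  then have "marg W X0 (restrict g1 X0) \<noteq> 0" using mW X0H Rpush by simp
  then obtain r where Wr: "W r \<noteq> 0" unfolding marg_push using push_supp by metis
  have wit: "\<exists>g. g \<in> G \<and> P Z g \<and> restrict g Z = restrict r Z" if ZH: "Z \<in> H" for Z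
  proof -
    have "marg W Z (restrict r Z) \<noteq> 0"
      unfolding marg_push by (rule push_pos[where f="\<lambda>g. restrict g Z"]) (rule posK, simp, rule fW, rule Wr)
    then have "R Z (restrict r Z) \<noteq> 0" using mW ZH by simp
    then have "Rs Z (restrict r Z) \<noteq> 0" unfolding R_def using h0 by auto
    then have "push (\<lambda>g. restrict g Z) (F c Z) (restrict r Z) \<noteq> 0" unfolding Rs_def marg_push .
    then obtain g where "F c Z g \<noteq> 0" "restrict g Z = restrict r Z" using push_supp by metis
    then show ?thesis unfolding F_def by (auto split: if_splits)
  qed
  have agree: "r v = g v" if "restrict g Z = restrict r Z" "v \<in> Z" for g Z v
  proof -
    have "restrict g Z v = restrict r Z v" using that(1) by simp
    then show ?thesis using that(2) by simp
  qed
  have rG: "r \<in> G"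
    unfolding G_iff
  proof (intro conjI ballI)
    show "r \<in> extensional V" using krel_parts(3)[OF kW Wr] unfolding V_def .
    fix v assume "v \<in> V"
    then obtain Z where ZH: "Z \<in> H" and vZ: "v \<in> Z" unfolding V_def by blast
    obtain g where "g \<in> G" "restrict g Z = restrict r Z" using wit[OF ZH] by blast
    then show "r v \<in> enc ` D v" using agree vZ G_val \<open>v \<in> V\<close> by metis
  qed
  have PZ: "\<forall>Z\<in>H. P Z r"
  proof
    fix Z assume ZH: "Z \<in> H"
    obtain g where gG: "g \<in> G" and Pg: "P Z g" and rg: "restrict g Z = restrict r Z" using wit[OF ZH] by blast
    have "P Z r = P Z g" by (rule P_cong) (use agree[OF rg] in simp)
    then show "P Z r" using Pg by simp
  qed
  show False by (rule parity_contra[OF rG PZ])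
qed

end

lemma exists_enc:
  assumes "finite (A :: 'x set)" "infinite (UNIV :: 'v set)"
  shows "\<exists>enc :: 'x \<Rightarrow> 'v. inj_on enc A"
proof -
  obtain f :: "nat \<Rightarrow> 'v" where f: "inj f" using infinite_countable_subset[OF assms(2)] by blast
  obtain g :: "'x \<Rightarrow> nat" and n :: nat where g: "g ` A = {i. i < n}" "inj_on g A"
    using finite_imp_inj_to_nat_seg[OF assms(1)] by blast
  have "inj_on f (g ` A)" using f inj_on_subset[OF f subset_UNIV] by blast
  then have "inj_on (f \<circ> g) A" using comp_inj_on[OF g(2)] by blast
  then show ?thesis by blast
qed

lemma single_acyclic: "hg_acyclic {X}"
proof -
  have w: "\<exists>p. gwalk {X} {} p \<and> hd p = X \<and> last p = X" by (intro exI[of _ "[X]"]) simp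
  have T: "is_tree {X} {}" unfolding is_tree_def using w by simp
  have "is_join_tree {X} {}"
    unfolding is_join_tree_def
  proof (intro conjI allI ballI impI)
    show "is_tree {X} {}" by (rule T)
    fix a A B assume "A \<in> {X}" "B \<in> {X}" "a \<in> A \<and> a \<in> B"
    then show "\<exists>p. gwalk {Z \<in> {X}. a \<in> Z} {} p \<and> hd p = A \<and> last p = B"
      by (intro exI[of _ "[X]"]) simp
  qed
  then show ?thesis unfolding hg_acyclic_def by blast
qed

lemma lgc_acyclic:
  fixes C :: "'c::comm_monoid_add set" and h :: "'c \<Rightarrow> 'k::comm_monoid_add"
  assumes K_pos: "pos_comm_monoid (UNIV :: 'k set)" and V_inf: "infinite (UNIV :: 'v set)"
    and cov: "is_cover C h"
  shows "\<forall>H :: 'a set set. card H = n \<longrightarrow> finite H \<longrightarrow> (\<forall>X\<in>H. finite X)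
           \<longrightarrow> lgc_up_to TYPE('v) C h H \<longrightarrow> hg_acyclic H"
proof (induction n rule: less_induct)
  case (less n)
  have posC: "pos_comm_monoid C" and h0: "h 0 = 0" and hp: "\<forall>x\<in>C. \<forall>y\<in>C. h (x + y) = h x + h y"
    using cov unfolding is_cover_def by blast+
  have C0: "0 \<in> C" and Cp: "\<forall>x\<in>C. \<forall>y\<in>C. x + y \<in> C" using pos_parts[OF posC] by blast+
  show ?case
  proof (intro allI impI)
    fix H :: "'a set set"
    assume cH: "card H = n" and fH: "finite H" and eH: "\<forall>X\<in>H. finite X" and lgc: "lgc_up_to TYPE('v) C h H"
    show "hg_acyclic H"
    proof (cases "card H \<le> 1")
      case True
      show ?thesis
      proof (cases "H = {}")
        case True then show ?thesis unfolding hg_acyclic_def by simp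
      next
        case False
        then have "card H = 1" using True fH by (simp add: card_gt_0_iff le_Suc_eq)
        then obtain X where "H = {X}" by (metis card_1_singletonE)
        then show ?thesis using single_acyclic by simp
      qed
    next
      case False
      then have c2: "card H \<ge> 2" by simp
      show ?thesis
      proof (cases "\<exists>X\<in>H. \<exists>Y\<in>H. X \<noteq> Y \<and> (\<forall>a\<in>Y. (\<exists>Z\<in>H. Z \<noteq> Y \<and> a \<in> Z) \<longrightarrow> a \<in> X)")
        case True
        then obtain X Y where XH: "X \<in> H" and YH: "Y \<in> H" and XY: "X \<noteq> Y"
          and ear: "\<forall>a\<in>Y. (\<exists>Z\<in>H. Z \<noteq> Y \<and> a \<in> Z) \<longrightarrow> a \<in> X" by blast
        have lgc': "lgc_up_to TYPE('v) C h (H - {Y})"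
          by (rule ear_lgc[OF C0 Cp h0 hp XH YH XY ear lgc])
        have cH': "card (H - {Y}) < n" using cH fH YH c2 by simp
        have "hg_acyclic (H - {Y})"
          using less.IH[OF cH', rule_format, OF refl _ _ lgc'] fH eH by simp
        moreover have XH': "X \<in> H - {Y}" using XH XY by simp
        ultimately obtain E' where J': "is_join_tree (H - {Y}) E'" unfolding hg_acyclic_def by blast
        have ear': "\<forall>a\<in>Y. (\<exists>Z\<in>H - {Y}. a \<in> Z) \<longrightarrow> a \<in> X" using ear by blast
        have "is_join_tree (insert Y (H - {Y})) (insert {Y, X} E')"
          by (rule add_ear[OF J' _ XH' ear']) simp
        moreover have "insert Y (H - {Y}) = H" using YH by blast
        ultimately have "is_join_tree H (insert {Y, X} E')" by simp
        then show ?thesis unfolding hg_acyclic_def by blast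
      next
        case False
        have noear: "\<forall>X\<in>H. \<forall>Y\<in>H. X \<noteq> Y \<longrightarrow> (\<exists>a\<in>Y. (\<exists>Z\<in>H. Z \<noteq> Y \<and> a \<in> Z) \<and> a \<notin> X)"
        proof (intro ballI impI)
          fix X Y assume X: "X \<in> H" and Y: "Y \<in> H" and XY: "X \<noteq> Y"
          show "\<exists>a\<in>Y. (\<exists>Z\<in>H. Z \<noteq> Y \<and> a \<in> Z) \<and> a \<notin> X"
          proof (rule ccontr)
            assume "\<not> (\<exists>a\<in>Y. (\<exists>Z\<in>H. Z \<noteq> Y \<and> a \<in> Z) \<and> a \<notin> X)"
            then have "\<forall>a\<in>Y. (\<exists>Z\<in>H. Z \<noteq> Y \<and> a \<in> Z) \<longrightarrow> a \<in> X" by blast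
            then show False using False X Y XY by blast
          qed
        qed
        obtain enc :: "'a set set \<Rightarrow> 'v" where inj: "inj_on enc (Pow H)"
          using exists_enc[OF _ V_inf, of "Pow H"] fH by blast
        have "H \<noteq> {}" using c2 by auto
        then obtain X0 where X0H: "X0 \<in> H" by blast
        interpret parity H enc X0 by unfold_locales (use fH eH inj X0H in auto)
        have "\<not> lgc_up_to TYPE('v) C h H" by (rule not_lgc[OF K_pos cov c2 noear])
        then show ?thesis using lgc by simp
      qed
    qed
  qed
qed

lemma cover_free:
  assumes K_pos: "pos_comm_monoid (UNIV :: 'k::comm_monoid_add set)"
  shows "is_cover (free_carrier :: 'k multiset set) free_hom"
proof -
  obtain k :: 'k where k0: "k \<noteq> 0"
  proof -
    obtain x y :: 'k where "x \<noteq> y" using K_pos unfolding pos_comm_monoid_def by blast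
    then show ?thesis using that by (cases "x = 0") auto
  qed
  have pos: "pos_comm_monoid (free_carrier :: 'k multiset set)"
    unfolding pos_comm_monoid_def free_carrier_def
  proof (intro conjI ballI impI)
    show "(0::'k multiset) \<in> {M. 0 \<notin># M}" by simp
    show "\<exists>x\<in>{M. (0::'k) \<notin># M}. \<exists>y\<in>{M. 0 \<notin># M}. x \<noteq> y"
      using k0 by (intro bexI[of _ "{#}"] bexI[of _ "{#k#}"]) auto
  qed auto
  have surj: "free_hom ` free_carrier = (UNIV :: 'k set)"
  proof (intro set_eqI iffI)
    fix x :: 'k assume "x \<in> UNIV"
    show "x \<in> free_hom ` free_carrier"
    proof (cases "x = 0")
      case True
      then show ?thesis unfolding free_hom_def free_carrier_def by (intro image_eqI[of _ _ "{#}"]) auto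
    next
      case False
      then show ?thesis unfolding free_hom_def free_carrier_def by (intro image_eqI[of _ _ "{#x#}"]) auto
    qed
  qed simp
  show ?thesis unfolding is_cover_def using pos surj by (simp add: free_hom_def)
qed

theorem theorem46:
  fixes H :: "'a set set"
    and C :: "'c::comm_monoid_add set"
    and h :: "'c \<Rightarrow> 'k::comm_monoid_add"
  assumes K_pos: "pos_comm_monoid (UNIV :: 'k set)"
    and H_fin: "finite H" and edges_fin: "\<forall>X\<in>H. finite X"
    and V_inf: "infinite (UNIV :: 'v set)"
  shows "is_cover (free_carrier :: 'k multiset set) free_hom
       \<and> (hg_acyclic H \<longleftrightarrow> lgc_up_to TYPE('v) (free_carrier :: 'k multiset set) free_hom H)
       \<and> (is_cover C h \<and> lgc_up_to TYPE('v) C h H \<longrightarrow> hg_acyclic H)"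
proof (intro conjI impI iffI)
  show cf: "is_cover (free_carrier :: 'k multiset set) free_hom" by (rule cover_free[OF K_pos])
  show "hg_acyclic H \<Longrightarrow> lgc_up_to TYPE('v) (free_carrier :: 'k multiset set) free_hom H"
    by (rule acyclic_lgc_free)
  show "lgc_up_to TYPE('v) (free_carrier :: 'k multiset set) free_hom H \<Longrightarrow> hg_acyclic H"
    using lgc_acyclic[OF K_pos V_inf cf, rule_format, OF refl H_fin edges_fin[rule_format]] by simp
  show "is_cover C h \<and> lgc_up_to TYPE('v) C h H \<Longrightarrow> hg_acyclic H"
    using lgc_acyclic[OF K_pos V_inf, of C h, rule_format, OF _ refl H_fin edges_fin[rule_format]] by blast
qed

end
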